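(* Let $f$ satisfy the standing assumption described in the context and let $\alpha,\beta>0$. Run Cubic-GDA with $0<\epsilon'\le\frac{\alpha L_1}{\beta L_G}$, $0<\eta_x\le(9L_\Phi+18\alpha+28\beta)^{-1}$, $\eta_y=\frac{2}{L_1+\mu}$, and inner iteration numbers satisfying $$N_0\ge\kappa\ln\Big(\frac{L_1\|y_0-y^*(x_0)\|}{2\beta\epsilon'^2}\Big),\qquad N_t\ge\kappa\ln\Big(\frac{2L_1\alpha\|s_{t-1}\|+L_1(\alpha+L_G\kappa)\|s_t\|}{L_G\beta\epsilon'^2}\Big)\ (t\ge1).$$ Let $T'=\min\{t\ge1:\ \max(\|s_{t-1}\|,\|s_t\|)\le\epsilon'\}$ ($T'=\infty$ if no such $t$) and $H_t:=\Phi(x_t)+(L_\Phi+2\alpha+3\beta)\|s_t\|^3$. Then for every integer $t$ with $0\le t\le T'-2$, $$H_{t+1}-H_t\le-(L_\Phi+\alpha+\beta)(\|s_{t+1}\|^3+\|s_t\|^3).$$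
   Context: Standing assumption: $f:\mathbb{R}^m\times\mathbb{R}^n\to\mathbb{R}$ is twice continuously differentiable; $\nabla f$ is $L_1$-Lipschitz; $y\mapsto f(x,y)$ is $\mu$-strongly concave for each $x$ ($\mu>0$); the Jacobian blocks $\nabla_{11}f,\nabla_{12}f,\nabla_{21}f,\nabla_{22}f$ are $L_2$-Lipschitz in $(x,y)$; $\Phi(x):=\max_y f(x,y)$ is bounded below with compact sub-level sets. Let $\kappa=L_1/\mu$, $y^*(x)=\arg\max_y f(x,y)$, $L_G=L_2(1+\kappa)^2$, $L_\Phi=L_2(1+\kappa)^3$, $G(x,y)=\big[\nabla_{11} f - \nabla_{12} f (\nabla_{22} f)^{-1} \nabla_{21} f\big](x,y)$ ($\nabla_{12}f$ the Jacobian of $\nabla_1 f$ in $y$, $\nabla_{21}f$ that of $\nabla_2 f$ in $x$). Cubic-GDA: given $x_0\in\mathbb{R}^m,y_0\in\mathbb{R}^n$, $\eta_x,\eta_y>0$, $\epsilon'>0$, integers $N_t\ge0$; convention $\|s_0\|:=\epsilon'$. For $t=0,1,2,\dots$: $\widetilde y_0=y_t$, $\widetilde y_{k+1}=\widetilde y_k+\eta_y\nabla_2 f(x_t,\widetilde y_k)$ for $k=0,\dots,N_t-1$, $y_{t+1}=\widetilde y_{N_t}$; $s_{t+1}$ a global minimizer over $s\in\mathbb{R}^m$ of $\nabla_1 f(x_t,y_{t+1})^\top s+\tfrac12 s^\top G(x_t,y_{t+1})s+\tfrac{1}{6\eta_x}\|s\|^3$; $x_{t+1}=x_t+s_{t+1}$.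 *)

theory Defs
  imports "HOL-Analysis.Analysis" "HOL-Library.Extended_Nat"
begin

definition Phi :: "('a \<Rightarrow> 'b \<Rightarrow> real) \<Rightarrow> 'a \<Rightarrow> real" where
  "Phi f x = (SUP y. f x y)"

definition ystar :: "('a \<Rightarrow> 'b \<Rightarrow> real) \<Rightarrow> 'a \<Rightarrow> 'b" where
  "ystar f x = (THE y. \<forall>y'. f x y' \<le> f x y)"

definition standing_assumption ::
  "(real^'m \<Rightarrow> real^'n \<Rightarrow> real) \<Rightarrow>
   (real^'m \<Rightarrow> real^'n \<Rightarrow> real^'m) \<Rightarrow> (real^'m \<Rightarrow> real^'n \<Rightarrow> real^'n) \<Rightarrow>
   (real^'m \<Rightarrow> real^'n \<Rightarrow> real^'m^'m) \<Rightarrow> (real^'m \<Rightarrow> real^'n \<Rightarrow> real^'n^'m) \<Rightarrow>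
   (real^'m \<Rightarrow> real^'n \<Rightarrow> real^'m^'n) \<Rightarrow> (real^'m \<Rightarrow> real^'n \<Rightarrow> real^'n^'n) \<Rightarrow>
   real \<Rightarrow> real \<Rightarrow> real \<Rightarrow> bool" where
  "standing_assumption f g1 g2 H11 H12 H21 H22 L1 L2 \<mu> \<longleftrightarrow>
     \<comment> \<open>f is differentiable with gradient (g1, g2)\<close>
     (\<forall>x y. ((\<lambda>p. f (fst p) (snd p)) has_derivative
               (\<lambda>h. g1 x y \<bullet> fst h + g2 x y \<bullet> snd h)) (at (x, y))) \<and>
     \<comment> \<open>the gradient is differentiable with Jacobian blocks H11, H12, H21, H22\<close>
     (\<forall>x y. ((\<lambda>p. g1 (fst p) (snd p)) has_derivative
               (\<lambda>h. H11 x y *v fst h + H12 x y *v snd h)) (at (x, y))) \<and>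
     (\<forall>x y. ((\<lambda>p. g2 (fst p) (snd p)) has_derivative
               (\<lambda>h. H21 x y *v fst h + H22 x y *v snd h)) (at (x, y))) \<and>
     \<comment> \<open>twice continuously differentiable\<close>
     continuous_on UNIV (\<lambda>p. H11 (fst p) (snd p)) \<and>
     continuous_on UNIV (\<lambda>p. H12 (fst p) (snd p)) \<and>
     continuous_on UNIV (\<lambda>p. H21 (fst p) (snd p)) \<and>
     continuous_on UNIV (\<lambda>p. H22 (fst p) (snd p)) \<and>
     \<comment> \<open>gradient is L1-Lipschitz\<close>
     0 \<le> L1 \<and>
     (\<forall>x y x' y'. norm ((g1 x y, g2 x y) - (g1 x' y', g2 x' y'))
                    \<le> L1 * norm ((x, y) - (x', y'))) \<and>
     \<comment> \<open>mu-strong concavity in y\<close>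
     0 < \<mu> \<and>
     (\<forall>x y y' t. 0 \<le> t \<and> t \<le> 1 \<longrightarrow>
        t * f x y + (1 - t) * f x y' + \<mu> / 2 * t * (1 - t) * (norm (y - y'))\<^sup>2
          \<le> f x (t *\<^sub>R y + (1 - t) *\<^sub>R y')) \<and>
     \<comment> \<open>Jacobian blocks are L2-Lipschitz (operator norm)\<close>
     0 \<le> L2 \<and>
     (\<forall>x y x' y'. onorm (\<lambda>v. (H11 x y - H11 x' y') *v v) \<le> L2 * norm ((x, y) - (x', y'))) \<and>
     (\<forall>x y x' y'. onorm (\<lambda>v. (H12 x y - H12 x' y') *v v) \<le> L2 * norm ((x, y) - (x', y'))) \<and>
     (\<forall>x y x' y'. onorm (\<lambda>v. (H21 x y - H21 x' y') *v v) \<le> L2 * norm ((x, y) - (x', y'))) \<and>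
     (\<forall>x y x' y'. onorm (\<lambda>v. (H22 x y - H22 x' y') *v v) \<le> L2 * norm ((x, y) - (x', y'))) \<and>
     \<comment> \<open>Phi bounded below with compact sub-level sets\<close>
     (\<exists>c. \<forall>x. c \<le> Phi f x) \<and>
     (\<forall>a. compact {x. Phi f x \<le> a})"

definition Gmat where
  "Gmat H11 H12 H21 H22 x y = H11 x y - H12 x y ** matrix_inv (H22 x y) ** H21 x y"

definition cubic_model :: "real^'m \<Rightarrow> real^'m^'m \<Rightarrow> real \<Rightarrow> real^'m \<Rightarrow> real" where
  "cubic_model g G \<eta> s = g \<bullet> s + 1/2 * (s \<bullet> (G *v s)) + 1 / (6 * \<eta>) * norm s ^ 3"

definition Tprime :: "real \<Rightarrow> (nat \<Rightarrow> real^'m) \<Rightarrow> enat" where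
  "Tprime \<epsilon> s = (if \<exists>t\<ge>1. max (norm (s (t-1))) (norm (s t)) \<le> \<epsilon>
                  then enat (LEAST t. t \<ge> 1 \<and> max (norm (s (t-1))) (norm (s t)) \<le> \<epsilon>)
                  else \<infinity>)"

end

theory Submission
  imports Defs
begin

lemma taylor1_upper:
  fixes \<phi> \<phi>' :: "real \<Rightarrow> real"
  assumes d: "\<And>t. (\<phi> has_real_derivative \<phi>' t) (at t)"
    and b: "\<And>t. 0 \<le> t \<Longrightarrow> t \<le> 1 \<Longrightarrow> \<phi>' t - \<phi>' 0 \<le> K * t"
  shows "\<phi> 1 \<le> \<phi> 0 + \<phi>' 0 + K / 2"
proof -
  let ?\<psi> = "\<lambda>t. \<phi> t - t * \<phi>' 0 - K / 2 * t ^ 2"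
  have "?\<psi> 1 \<le> ?\<psi> 0"
  proof (rule DERIV_nonpos_imp_nonincreasing[of 0 1])
    fix x :: real assume "0 \<le> x" "x \<le> 1"
    show "\<exists>y. (?\<psi> has_real_derivative y) (at x) \<and> y \<le> 0"
      apply (rule exI[of _ "\<phi>' x - \<phi>' 0 - K * x"])
      using b[OF \<open>0 \<le> x\<close> \<open>x \<le> 1\<close>]
      by (auto intro!: derivative_eq_intros d)
  qed simp
  then show ?thesis by simp
qed

lemma taylor2_upper:
  fixes \<phi> \<phi>' \<phi>'' :: "real \<Rightarrow> real"
  assumes d: "\<And>t. (\<phi> has_real_derivative \<phi>' t) (at t)"
    and d2: "\<And>t. (\<phi>' has_real_derivative \<phi>'' t) (at t)"
    and b: "\<And>t. 0 \<le> t \<Longrightarrow> t \<le> 1 \<Longrightarrow> \<phi>'' t - \<phi>'' 0 \<le> K * t"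
  shows "\<phi> 1 \<le> \<phi> 0 + \<phi>' 0 + \<phi>'' 0 / 2 + K / 6"
proof -
  let ?\<chi> = "\<lambda>t. \<phi>' t - t * \<phi>'' 0 - K / 2 * t ^ 2"
  have c: "?\<chi> x \<le> ?\<chi> 0" if "0 \<le> x" "x \<le> 1" for x
  proof (rule DERIV_nonpos_imp_nonincreasing[of 0 x])
    fix z :: real assume "0 \<le> z" "z \<le> x"
    show "\<exists>y. (?\<chi> has_real_derivative y) (at z) \<and> y \<le> 0"
      apply (rule exI[of _ "\<phi>'' z - \<phi>'' 0 - K * z"])
      using b[of z] that \<open>0 \<le> z\<close> \<open>z \<le> x\<close>
      by (auto intro!: derivative_eq_intros d2)
  qed (use that in simp)
  let ?\<psi> = "\<lambda>t. \<phi> t - t * \<phi>' 0 - t^2 / 2 * \<phi>'' 0 - K / 6 * t ^ 3"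
  have "?\<psi> 1 \<le> ?\<psi> 0"
  proof (rule DERIV_nonpos_imp_nonincreasing[of 0 1])
    fix x :: real assume "0 \<le> x" "x \<le> 1"
    show "\<exists>y. (?\<psi> has_real_derivative y) (at x) \<and> y \<le> 0"
      apply (rule exI[of _ "\<phi>' x - \<phi>' 0 - x * \<phi>'' 0 - K / 2 * x ^ 2"])
      using c[OF \<open>0 \<le> x\<close> \<open>x \<le> 1\<close>]
      by (auto intro!: derivative_eq_intros d simp: power2_eq_square power3_eq_cube algebra_simps)
  qed simp
  then show ?thesis by simp
qed

lemma le_of_forall_pos:
  fixes X Y C :: real
  assumes "\<And>h. 0 < h \<Longrightarrow> h \<le> 1 \<Longrightarrow> X \<le> Y + C * h"
  shows "X \<le> Y"
proof (rule ccontr)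
  assume "\<not> X \<le> Y"
  define h where "h = min 1 ((X - Y) / (2 * (\<bar>C\<bar> + 1)))"
  have hp: "0 < h" "h \<le> 1" using \<open>\<not> X \<le> Y\<close> by (auto simp: h_def)
  have "C * h \<le> \<bar>C\<bar> * h" using hp by (simp add: mult_right_mono)
  also have "\<dots> \<le> (\<bar>C\<bar> + 1) * ((X - Y) / (2 * (\<bar>C\<bar> + 1)))"
    using hp by (intro mult_mono) (auto simp: h_def)
  also have "\<dots> = (X - Y) / 2" by (simp add: field_simps)
  finally have "C * h \<le> X / 2 - Y / 2" by simp
  then show False using assms[OF hp] \<open>\<not> X \<le> Y\<close> by linarith
qed


locale SAloc =
  fixes f :: "real^'m \<Rightarrow> real^'n \<Rightarrow> real"
    and g1 :: "real^'m \<Rightarrow> real^'n \<Rightarrow> real^'m" and g2 :: "real^'m \<Rightarrow> real^'n \<Rightarrow> real^'n"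
    and H11 :: "real^'m \<Rightarrow> real^'n \<Rightarrow> real^'m^'m" and H12 :: "real^'m \<Rightarrow> real^'n \<Rightarrow> real^'n^'m"
    and H21 :: "real^'m \<Rightarrow> real^'n \<Rightarrow> real^'m^'n" and H22 :: "real^'m \<Rightarrow> real^'n \<Rightarrow> real^'n^'n"
    and L1 L2 \<mu> :: real
  assumes SA: "standing_assumption f g1 g2 H11 H12 H21 H22 L1 L2 \<mu>"
begin

definition "F p = f (fst p) (snd p)"
definition "gr p = (g1 (fst p) (snd p), g2 (fst p) (snd p))"
definition "Hv p q = (H11 (fst p) (snd p) *v fst q + H12 (fst p) (snd p) *v snd q,
                      H21 (fst p) (snd p) *v fst q + H22 (fst p) (snd p) *v snd q)"

lemma L1_nonneg: "0 \<le> L1" and mu_pos: "0 < \<mu>" and L2_nonneg: "0 \<le> L2"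
  using SA by (simp_all add: standing_assumption_def)

lemma SA_dF: "\<forall>x y. ((\<lambda>p. f (fst p) (snd p)) has_derivative
               (\<lambda>h. g1 x y \<bullet> fst h + g2 x y \<bullet> snd h)) (at (x, y))"
  and SA_dg1: "\<forall>x y. ((\<lambda>p. g1 (fst p) (snd p)) has_derivative
               (\<lambda>h. H11 x y *v fst h + H12 x y *v snd h)) (at (x, y))"
  and SA_dg2: "\<forall>x y. ((\<lambda>p. g2 (fst p) (snd p)) has_derivative
               (\<lambda>h. H21 x y *v fst h + H22 x y *v snd h)) (at (x, y))"
  and SA_glip: "\<forall>x y x' y'. norm ((g1 x y, g2 x y) - (g1 x' y', g2 x' y'))
                    \<le> L1 * norm ((x, y) - (x', y'))"
  and SA_conc: "\<forall>x y y' t. 0 \<le> t \<and> t \<le> 1 \<longrightarrow>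
        t * f x y + (1 - t) * f x y' + \<mu> / 2 * t * (1 - t) * (norm (y - y'))\<^sup>2
          \<le> f x (t *\<^sub>R y + (1 - t) *\<^sub>R y')"
  and SA_H11: "\<forall>x y x' y'. onorm (\<lambda>v. (H11 x y - H11 x' y') *v v) \<le> L2 * norm ((x, y) - (x', y'))"
  and SA_H12: "\<forall>x y x' y'. onorm (\<lambda>v. (H12 x y - H12 x' y') *v v) \<le> L2 * norm ((x, y) - (x', y'))"
  and SA_H21: "\<forall>x y x' y'. onorm (\<lambda>v. (H21 x y - H21 x' y') *v v) \<le> L2 * norm ((x, y) - (x', y'))"
  and SA_H22: "\<forall>x y x' y'. onorm (\<lambda>v. (H22 x y - H22 x' y') *v v) \<le> L2 * norm ((x, y) - (x', y'))"
  using SA by (simp_all add: standing_assumption_def)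

lemma F_deriv: "(F has_derivative (\<lambda>h. gr p \<bullet> h)) (at p)"
proof -
  have "((\<lambda>p. f (fst p) (snd p)) has_derivative
      (\<lambda>h. g1 (fst p) (snd p) \<bullet> fst h + g2 (fst p) (snd p) \<bullet> snd h)) (at (fst p, snd p))"
    using SA_dF by blast
  then show ?thesis by (simp add: F_def[abs_def] gr_def inner_prod_def)
qed

lemma gr_deriv: "(gr has_derivative Hv p) (at p)"
proof -
  have 1: "((\<lambda>p. g1 (fst p) (snd p)) has_derivative
      (\<lambda>h. H11 (fst p) (snd p) *v fst h + H12 (fst p) (snd p) *v snd h)) (at (fst p, snd p))"
    using SA_dg1 by blast
  have 2: "((\<lambda>p. g2 (fst p) (snd p)) has_derivative
      (\<lambda>h. H21 (fst p) (snd p) *v fst h + H22 (fst p) (snd p) *v snd h)) (at (fst p, snd p))"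
    using SA_dg2 by blast
  show ?thesis using has_derivative_Pair[OF 1 2]
    by (simp add: gr_def[abs_def] Hv_def[abs_def])
qed

lemma Hv_linear: "linear (Hv p)"
  using gr_deriv has_derivative_linear by blast

lemma Hv_scale: "Hv p (c *\<^sub>R q) = c *\<^sub>R Hv p q"
  using Hv_linear linear_cmul by blast

lemma gr_lip: "norm (gr p - gr p') \<le> L1 * norm (p - p')"
  using SA_glip[rule_format, of "fst p" "snd p" "fst p'" "snd p'"] unfolding gr_def
  by simp

lemma mat_bound: fixes A :: "real^'a^'b" shows "\<bar>u \<bullet> (A *v v)\<bar> \<le> onorm ((*v) A) * norm u * norm v"
proof -
  have "\<bar>u \<bullet> (A *v v)\<bar> \<le> norm u * norm (A *v v)" by (rule Cauchy_Schwarz_ineq2)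
  also have "\<dots> \<le> norm u * (onorm ((*v) A) * norm v)"
    using onorm[OF matrix_vector_mul_bounded_linear[of A], of v] by (intro mult_left_mono) auto
  finally show ?thesis by (simp add: ac_simps)
qed

lemma Hlip_bound:
  fixes A B :: "real^'a^'b"
  assumes "onorm ((*v) (A - B)) \<le> L2 * d"
  shows "\<bar>u \<bullet> (A *v v) - u \<bullet> (B *v v)\<bar> \<le> L2 * d * norm u * norm v"
proof -
  have "\<bar>u \<bullet> (A *v v) - u \<bullet> (B *v v)\<bar> = \<bar>u \<bullet> ((A - B) *v v)\<bar>"
    by (metis matrix_vector_mult_diff_rdistrib inner_diff_right)
  also have "\<dots> \<le> onorm ((*v) (A - B)) * norm u * norm v" by (rule mat_bound)
  also have "\<dots> \<le> L2 * d * norm u * norm v"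
    using assms by (intro mult_right_mono) auto
  finally show ?thesis .
qed

definition nn :: "(real^'m) \<times> (real^'n) \<Rightarrow> real" where "nn q = norm (fst q) + norm (snd q)"

lemma nn_nonneg: "0 \<le> nn q" by (simp add: nn_def)
lemma norm_le_nn: "norm q \<le> nn q"
  unfolding nn_def by (metis norm_Pair_le prod.collapse)

lemma Hv_diff_bound:
  "\<bar>a \<bullet> Hv p b - a \<bullet> Hv p' b\<bar> \<le> L2 * norm (p - p') * nn a * nn b"
proof -
  obtain x y where p: "p = (x, y)" by (cases p)
  obtain x' y' where p': "p' = (x', y')" by (cases p')
  have b11: "\<bar>fst a \<bullet> (H11 x y *v fst b) - fst a \<bullet> (H11 x' y' *v fst b)\<bar> \<le> L2 * norm (p - p') * norm (fst a) * norm (fst b)"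
    by (rule Hlip_bound) (use SA_H11[rule_format, of x y x' y'] in \<open>simp add: p p'\<close>)
  have b12: "\<bar>fst a \<bullet> (H12 x y *v snd b) - fst a \<bullet> (H12 x' y' *v snd b)\<bar> \<le> L2 * norm (p - p') * norm (fst a) * norm (snd b)"
    by (rule Hlip_bound) (use SA_H12[rule_format, of x y x' y'] in \<open>simp add: p p'\<close>)
  have b21: "\<bar>snd a \<bullet> (H21 x y *v fst b) - snd a \<bullet> (H21 x' y' *v fst b)\<bar> \<le> L2 * norm (p - p') * norm (snd a) * norm (fst b)"
    by (rule Hlip_bound) (use SA_H21[rule_format, of x y x' y'] in \<open>simp add: p p'\<close>)
  have b22: "\<bar>snd a \<bullet> (H22 x y *v snd b) - snd a \<bullet> (H22 x' y' *v snd b)\<bar> \<le> L2 * norm (p - p') * norm (snd a) * norm (snd b)"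
    by (rule Hlip_bound) (use SA_H22[rule_format, of x y x' y'] in \<open>simp add: p p'\<close>)
  have e: "a \<bullet> Hv p b - a \<bullet> Hv p' b =
    (fst a \<bullet> (H11 x y *v fst b) - fst a \<bullet> (H11 x' y' *v fst b)) +
    (fst a \<bullet> (H12 x y *v snd b) - fst a \<bullet> (H12 x' y' *v snd b)) +
    (snd a \<bullet> (H21 x y *v fst b) - snd a \<bullet> (H21 x' y' *v fst b)) +
    (snd a \<bullet> (H22 x y *v snd b) - snd a \<bullet> (H22 x' y' *v snd b))"
    by (simp add: Hv_def p p' inner_prod_def inner_add_right)
  have "L2 * norm (p - p') * nn a * nn b =
     L2 * norm (p - p') * norm (fst a) * norm (fst b) + L2 * norm (p - p') * norm (fst a) * norm (snd b)
     + L2 * norm (p - p') * norm (snd a) * norm (fst b) + L2 * norm (p - p') * norm (snd a) * norm (snd b)"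
    by (simp add: nn_def algebra_simps)
  then show ?thesis unfolding e using b11 b12 b21 b22 by linarith
qed

lemma F_line: "((\<lambda>\<tau>. F (p + \<tau> *\<^sub>R q)) has_real_derivative (gr (p + t *\<^sub>R q) \<bullet> q)) (at t)"
proof -
  have 1: "((\<lambda>\<tau>. p + \<tau> *\<^sub>R q) has_derivative (\<lambda>\<tau>. \<tau> *\<^sub>R q)) (at t)"
    by (auto intro!: derivative_eq_intros)
  have "((\<lambda>\<tau>. F (p + \<tau> *\<^sub>R q)) has_derivative (\<lambda>\<tau>. gr (p + t *\<^sub>R q) \<bullet> (\<tau> *\<^sub>R q))) (at t)"
    using has_derivative_compose[OF 1 F_deriv] by simp
  then show ?thesis unfolding has_field_derivative_def
    by (rule has_derivative_eq_rhs) (simp add: fun_eq_iff mult.commute)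
qed

lemma gr_line: "((\<lambda>\<tau>. c \<bullet> gr (p + \<tau> *\<^sub>R q)) has_real_derivative (c \<bullet> Hv (p + t *\<^sub>R q) q)) (at t)"
proof -
  have 1: "((\<lambda>\<tau>. p + \<tau> *\<^sub>R q) has_derivative (\<lambda>\<tau>. \<tau> *\<^sub>R q)) (at t)"
    by (auto intro!: derivative_eq_intros)
  have "((\<lambda>\<tau>. gr (p + \<tau> *\<^sub>R q)) has_derivative (\<lambda>\<tau>. Hv (p + t *\<^sub>R q) (\<tau> *\<^sub>R q))) (at t)"
    using has_derivative_compose[OF 1 gr_deriv] by simp
  then have "((\<lambda>\<tau>. c \<bullet> gr (p + \<tau> *\<^sub>R q)) has_derivative (\<lambda>\<tau>. c \<bullet> Hv (p + t *\<^sub>R q) (\<tau> *\<^sub>R q))) (at t)"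
    by (rule has_derivative_inner_right)
  then show ?thesis unfolding has_field_derivative_def
    by (rule has_derivative_eq_rhs) (simp add: fun_eq_iff mult.commute Hv_scale)
qed

end

context SAloc begin

lemma nn_scale: "0 \<le> h \<Longrightarrow> nn (h *\<^sub>R q) = h * nn q"
  by (simp add: nn_def algebra_simps)

lemma nn_minus: "nn (- q) = nn q"
  by (simp add: nn_def)

lemma taylor1_gr_upper:
  "c \<bullet> gr (p + q) \<le> c \<bullet> gr p + c \<bullet> Hv p q + L2 * norm q * nn c * nn q / 2"
proof -
  let ?\<phi> = "\<lambda>\<tau>. c \<bullet> gr (p + \<tau> *\<^sub>R q)"
  let ?\<phi>' = "\<lambda>\<tau>. c \<bullet> Hv (p + \<tau> *\<^sub>R q) q"
  have "?\<phi> 1 \<le> ?\<phi> 0 + ?\<phi>' 0 + (L2 * norm q * nn c * nn q) / 2"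
  proof (rule taylor1_upper)
    fix t show "(?\<phi> has_real_derivative ?\<phi>' t) (at t)" by (rule gr_line)
  next
    fix t :: real assume t: "0 \<le> t" "t \<le> 1"
    have "\<bar>c \<bullet> Hv (p + t *\<^sub>R q) q - c \<bullet> Hv p q\<bar> \<le> L2 * norm (p + t *\<^sub>R q - p) * nn c * nn q"
      by (rule Hv_diff_bound)
    also have "\<dots> = L2 * norm q * nn c * nn q * t" using t by (simp add: algebra_simps)
    finally show "?\<phi>' t - ?\<phi>' 0 \<le> L2 * norm q * nn c * nn q * t" by simp
  qed
  then show ?thesis by simp
qed

lemma taylor1_gr_lower:
  "c \<bullet> gr (p + q) \<ge> c \<bullet> gr p + c \<bullet> Hv p q - L2 * norm q * nn c * nn q / 2"
  using taylor1_gr_upper[of "-c" p q] by (simp add: nn_minus)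

lemma taylor2_F_upper:
  "F (p + q) \<le> F p + gr p \<bullet> q + q \<bullet> Hv p q / 2 + L2 * norm q * nn q ^ 2 / 6"
proof -
  let ?\<phi> = "\<lambda>\<tau>. F (p + \<tau> *\<^sub>R q)"
  let ?\<phi>' = "\<lambda>\<tau>. q \<bullet> gr (p + \<tau> *\<^sub>R q)"
  let ?\<phi>'' = "\<lambda>\<tau>. q \<bullet> Hv (p + \<tau> *\<^sub>R q) q"
  have "?\<phi> 1 \<le> ?\<phi> 0 + ?\<phi>' 0 + ?\<phi>'' 0 / 2 + (L2 * norm q * nn q ^ 2) / 6"
  proof (rule taylor2_upper)
    fix t show "(?\<phi> has_real_derivative ?\<phi>' t) (at t)"
      using F_line[of p q t] by (simp add: inner_commute)
  next
    fix t show "(?\<phi>' has_real_derivative ?\<phi>'' t) (at t)" by (rule gr_line)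
  next
    fix t :: real assume t: "0 \<le> t" "t \<le> 1"
    have "\<bar>q \<bullet> Hv (p + t *\<^sub>R q) q - q \<bullet> Hv p q\<bar> \<le> L2 * norm (p + t *\<^sub>R q - p) * nn q * nn q"
      by (rule Hv_diff_bound)
    also have "\<dots> = L2 * norm q * nn q ^ 2 * t" using t by (simp add: algebra_simps power2_eq_square)
    finally show "?\<phi>'' t - ?\<phi>'' 0 \<le> L2 * norm q * nn q ^ 2 * t" by simp
  qed
  then show ?thesis by (simp add: inner_commute)
qed

lemma taylor2_F_lower:
  "F (p + q) \<ge> F p + gr p \<bullet> q + q \<bullet> Hv p q / 2 - L2 * norm q * nn q ^ 2 / 6"
proof -
  let ?\<phi> = "\<lambda>\<tau>. - F (p + \<tau> *\<^sub>R q)"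
  let ?\<phi>' = "\<lambda>\<tau>. - (q \<bullet> gr (p + \<tau> *\<^sub>R q))"
  let ?\<phi>'' = "\<lambda>\<tau>. - (q \<bullet> Hv (p + \<tau> *\<^sub>R q) q)"
  have "?\<phi> 1 \<le> ?\<phi> 0 + ?\<phi>' 0 + ?\<phi>'' 0 / 2 + (L2 * norm q * nn q ^ 2) / 6"
  proof (rule taylor2_upper)
    fix t show "(?\<phi> has_real_derivative ?\<phi>' t) (at t)"
      using F_line[of p q t] by (auto intro!: derivative_eq_intros simp: inner_commute)
  next
    fix t show "(?\<phi>' has_real_derivative ?\<phi>'' t) (at t)"
      using gr_line[of q p q t] by (auto intro!: derivative_eq_intros)
  next
    fix t :: real assume t: "0 \<le> t" "t \<le> 1"
    have "\<bar>q \<bullet> Hv (p + t *\<^sub>R q) q - q \<bullet> Hv p q\<bar> \<le> L2 * norm (p + t *\<^sub>R q - p) * nn q * nn q"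
      by (rule Hv_diff_bound)
    also have "\<dots> = L2 * norm q * nn q ^ 2 * t" using t by (simp add: algebra_simps power2_eq_square)
    finally show "?\<phi>'' t - ?\<phi>'' 0 \<le> L2 * norm q * nn q ^ 2 * t" by simp
  qed
  then show ?thesis by (simp add: inner_commute)
qed

end

context SAloc begin

lemma sym_aux:
  "\<bar>A \<bullet> Hv p B - B \<bullet> Hv p A\<bar> \<le> L2 * (norm A * nn A ^ 2 / 3 + norm B * nn A * nn B / 2 + norm B * nn A ^ 2 / 2
      + norm B * nn B ^ 2 / 3 + norm A * nn B * nn A / 2 + norm A * nn B ^ 2 / 2)"
proof -
  define D where "D = F (p + A + B) - F (p + B) - F (p + A) + F p"
  have e1: "p + A + B = (p + B) + A" by (simp add: algebra_simps)
  have i1: "F (p + A + B) \<le> F (p + B) + gr (p + B) \<bullet> A + A \<bullet> Hv (p + B) A / 2 + L2 * norm A * nn A ^ 2 / 6"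
    unfolding e1 by (rule taylor2_F_upper)
  have i2: "F (p + A + B) \<ge> F (p + B) + gr (p + B) \<bullet> A + A \<bullet> Hv (p + B) A / 2 - L2 * norm A * nn A ^ 2 / 6"
    unfolding e1 by (rule taylor2_F_lower)
  have i3: "F (p + A) \<le> F p + gr p \<bullet> A + A \<bullet> Hv p A / 2 + L2 * norm A * nn A ^ 2 / 6"
    by (rule taylor2_F_upper)
  have i4: "F (p + A) \<ge> F p + gr p \<bullet> A + A \<bullet> Hv p A / 2 - L2 * norm A * nn A ^ 2 / 6"
    by (rule taylor2_F_lower)
  have i5: "A \<bullet> gr (p + B) \<le> A \<bullet> gr p + A \<bullet> Hv p B + L2 * norm B * nn A * nn B / 2"
    by (rule taylor1_gr_upper)
  have i6: "A \<bullet> gr (p + B) \<ge> A \<bullet> gr p + A \<bullet> Hv p B - L2 * norm B * nn A * nn B / 2"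
    by (rule taylor1_gr_lower)
  have i7: "\<bar>A \<bullet> Hv (p + B) A - A \<bullet> Hv p A\<bar> \<le> L2 * norm (p + B - p) * nn A * nn A"
    by (rule Hv_diff_bound)
  have i7': "\<bar>A \<bullet> Hv (p + B) A - A \<bullet> Hv p A\<bar> \<le> L2 * norm B * nn A ^ 2"
    using i7 by (simp add: power2_eq_square mult.assoc)
  have c1: "\<bar>D - A \<bullet> Hv p B\<bar> \<le> L2 * (norm A * nn A ^ 2 / 3 + norm B * nn A * nn B / 2 + norm B * nn A ^ 2 / 2)"
    using i1 i2 i3 i4 i5 i6 i7' unfolding D_def
    by (simp add: inner_commute[of _ A] algebra_simps abs_le_iff) 
  have e2: "p + B + A = (p + A) + B" by (simp add: algebra_simps)
  have j1: "F (p + B + A) \<le> F (p + A) + gr (p + A) \<bullet> B + B \<bullet> Hv (p + A) B / 2 + L2 * norm B * nn B ^ 2 / 6"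
    unfolding e2 by (rule taylor2_F_upper)
  have j2: "F (p + B + A) \<ge> F (p + A) + gr (p + A) \<bullet> B + B \<bullet> Hv (p + A) B / 2 - L2 * norm B * nn B ^ 2 / 6"
    unfolding e2 by (rule taylor2_F_lower)
  have j3: "F (p + B) \<le> F p + gr p \<bullet> B + B \<bullet> Hv p B / 2 + L2 * norm B * nn B ^ 2 / 6"
    by (rule taylor2_F_upper)
  have j4: "F (p + B) \<ge> F p + gr p \<bullet> B + B \<bullet> Hv p B / 2 - L2 * norm B * nn B ^ 2 / 6"
    by (rule taylor2_F_lower)
  have j5: "B \<bullet> gr (p + A) \<le> B \<bullet> gr p + B \<bullet> Hv p A + L2 * norm A * nn B * nn A / 2"
    by (rule taylor1_gr_upper)
  have j6: "B \<bullet> gr (p + A) \<ge> B \<bullet> gr p + B \<bullet> Hv p A - L2 * norm A * nn B * nn A / 2"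
    by (rule taylor1_gr_lower)
  have j7: "\<bar>B \<bullet> Hv (p + A) B - B \<bullet> Hv p B\<bar> \<le> L2 * norm (p + A - p) * nn B * nn B"
    by (rule Hv_diff_bound)
  have j7': "\<bar>B \<bullet> Hv (p + A) B - B \<bullet> Hv p B\<bar> \<le> L2 * norm A * nn B ^ 2"
    using j7 by (simp add: power2_eq_square mult.assoc)
  have e3: "p + B + A = p + A + B" by (simp add: algebra_simps)
  have c2: "\<bar>D - B \<bullet> Hv p A\<bar> \<le> L2 * (norm B * nn B ^ 2 / 3 + norm A * nn B * nn A / 2 + norm A * nn B ^ 2 / 2)"
    using j1 j2 j3 j4 j5 j6 j7' unfolding D_def e3[symmetric]
    by (simp add: inner_commute[of _ B] algebra_simps abs_le_iff) 
  show ?thesis using c1 c2 by (simp add: algebra_simps abs_le_iff)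
qed

lemma Hv_sym: "a \<bullet> Hv p b = b \<bullet> Hv p a"
proof -
  define R where "R = L2 * (norm a * nn a ^ 2 / 3 + norm b * nn a * nn b / 2 + norm b * nn a ^ 2 / 2
      + norm b * nn b ^ 2 / 3 + norm a * nn b * nn a / 2 + norm a * nn b ^ 2 / 2)"
  have "\<bar>a \<bullet> Hv p b - b \<bullet> Hv p a\<bar> \<le> 0 + R * h" if h: "0 < h" "h \<le> 1" for h
  proof -
    have "\<bar>(h *\<^sub>R a) \<bullet> Hv p (h *\<^sub>R b) - (h *\<^sub>R b) \<bullet> Hv p (h *\<^sub>R a)\<bar> \<le> L2 * (norm (h *\<^sub>R a) * nn (h *\<^sub>R a) ^ 2 / 3 + norm (h *\<^sub>R b) * nn (h *\<^sub>R a) * nn (h *\<^sub>R b) / 2 + norm (h *\<^sub>R b) * nn (h *\<^sub>R a) ^ 2 / 2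
      + norm (h *\<^sub>R b) * nn (h *\<^sub>R b) ^ 2 / 3 + norm (h *\<^sub>R a) * nn (h *\<^sub>R b) * nn (h *\<^sub>R a) / 2 + norm (h *\<^sub>R a) * nn (h *\<^sub>R b) ^ 2 / 2)"
      by (rule sym_aux)
    also have "\<dots> = h ^ 2 * (h * R)"
      using h by (simp add: nn_scale R_def algebra_simps power2_eq_square)
    finally have fin: "\<bar>(h *\<^sub>R a) \<bullet> Hv p (h *\<^sub>R b) - (h *\<^sub>R b) \<bullet> Hv p (h *\<^sub>R a)\<bar> \<le> h ^ 2 * (h * R)" .
    have eq: "(h *\<^sub>R a) \<bullet> Hv p (h *\<^sub>R b) - (h *\<^sub>R b) \<bullet> Hv p (h *\<^sub>R a) = h ^ 2 * (a \<bullet> Hv p b - b \<bullet> Hv p a)"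
      by (simp add: Hv_scale algebra_simps power2_eq_square)
    have "h ^ 2 * \<bar>a \<bullet> Hv p b - b \<bullet> Hv p a\<bar> \<le> h ^ 2 * (h * R)"
      using fin unfolding eq by (simp add: abs_mult)
    then have "\<bar>a \<bullet> Hv p b - b \<bullet> Hv p a\<bar> \<le> h * R"
      using h by (simp add: mult_le_cancel_left_pos)
    then show ?thesis by (simp add: mult.commute)
  qed
  then have "\<bar>a \<bullet> Hv p b - b \<bullet> Hv p a\<bar> \<le> 0" by (rule le_of_forall_pos)
  then show ?thesis by simp
qed

lemma sym12: "s \<bullet> (H12 x y *v d) = d \<bullet> (H21 x y *v s)"
  using Hv_sym[of "(s, 0)" "(x, y)" "(0, d)"] by (simp add: Hv_def inner_prod_def)

lemma sym22: "d \<bullet> (H22 x y *v e) = e \<bullet> (H22 x y *v d)"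
  using Hv_sym[of "(0, d)" "(x, y)" "(0, e)"] by (simp add: Hv_def inner_prod_def)

end

lemma norm_diff_sq: "norm (z - y :: 'a::real_inner) ^ 2 = norm z ^ 2 - 2 * (z \<bullet> y) + norm y ^ 2"
  by (simp add: power2_norm_eq_inner inner_diff_left inner_diff_right inner_commute)

lemma cocoercive_abs:
  fixes P :: "'a::real_inner \<Rightarrow> real" and DP :: "'a \<Rightarrow> 'a"
  assumes cvx: "\<And>y z. P y + DP y \<bullet> (z - y) \<le> P z"
      and smo: "\<And>y z. P z \<le> P y + DP y \<bullet> (z - y) + L' / 2 * norm (z - y) ^ 2"
      and L': "0 \<le> L'"
  shows "norm (DP b - DP a) ^ 2 \<le> L' * ((DP b - DP a) \<bullet> (b - a))"
proof -
  have key: "norm (DP b - DP a) ^ 2 \<le> 2 * L' * (P b - P a - DP a \<bullet> (b - a))" for a b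
  proof -
    define w where "w = DP b - DP a"
    define \<Delta> where "\<Delta> = P b - P a - DP a \<bullet> (b - a)"
    have t: "t * norm w ^ 2 - L' / 2 * t ^ 2 * norm w ^ 2 \<le> \<Delta>" for t
    proof -
      define z where "z = b - t *\<^sub>R w"
      have 1: "P a + DP a \<bullet> (z - a) \<le> P z" by (rule cvx)
      have 2: "P z \<le> P b + DP b \<bullet> (z - b) + L' / 2 * norm (z - b) ^ 2" by (rule smo)
      have "z - b = - (t *\<^sub>R w)" by (simp add: z_def)
      then have 3: "norm (z - b) ^ 2 = t ^ 2 * norm w ^ 2" by (simp add: power_mult_distrib)
      have 4: "DP b \<bullet> (z - b) - DP a \<bullet> (z - a) = - t * norm w ^ 2 - DP a \<bullet> (b - a)"
        by (simp add: z_def w_def inner_diff_right inner_diff_left power2_norm_eq_inner algebra_simps)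
      have 5: "L' / 2 * norm (z - b) ^ 2 = L' / 2 * t ^ 2 * norm w ^ 2" using 3 by simp
      show ?thesis using 1 2 5 4 unfolding \<Delta>_def by linarith
    qed
    show ?thesis
    proof (cases "L' = 0")
      case True
      have "norm w ^ 2 \<le> 0"
      proof (rule ccontr)
        assume "\<not> norm w ^ 2 \<le> 0"
        then have pos: "norm w ^ 2 > 0" by simp
        have "(\<bar>\<Delta>\<bar> + 1) / norm w ^ 2 * norm w ^ 2 \<le> \<Delta>" using t[of "(\<bar>\<Delta>\<bar> + 1) / norm w ^ 2"] True by simp
        then show False using pos by simp
      qed
      then show ?thesis unfolding w_def by (simp add: True)
    next
      case False
      then have Lp: "L' > 0" using L' by simp
      have "1 / L' * norm w ^ 2 - L' / 2 * (1 / L') ^ 2 * norm w ^ 2 \<le> \<Delta>" by (rule t)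
      moreover have "1 / L' * norm w ^ 2 - L' / 2 * (1 / L') ^ 2 * norm w ^ 2 = norm w ^ 2 / (2 * L')"
        using Lp by (simp add: field_simps power2_eq_square)
      ultimately have "norm w ^ 2 / (2 * L') \<le> \<Delta>" by simp
      then show ?thesis using Lp unfolding w_def \<Delta>_def by (simp add: field_simps)
    qed
  qed
  have k1: "norm (DP b - DP a) ^ 2 \<le> 2 * L' * (P b - P a - DP a \<bullet> (b - a))" by (rule key)
  have k2: "norm (DP a - DP b) ^ 2 \<le> 2 * L' * (P a - P b - DP b \<bullet> (a - b))" by (rule key)
  have n: "norm (DP a - DP b) = norm (DP b - DP a)" by (rule norm_minus_commute)
  have s: "(P b - P a - DP a \<bullet> (b - a)) + (P a - P b - DP b \<bullet> (a - b)) = (DP b - DP a) \<bullet> (b - a)"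
    by (simp add: inner_diff_left inner_diff_right algebra_simps)
  have "2 * norm (DP b - DP a) ^ 2 \<le> 2 * L' * ((P b - P a - DP a \<bullet> (b - a)) + (P a - P b - DP b \<bullet> (a - b)))"
    using k1 k2 n by (simp add: algebra_simps)
  then show ?thesis unfolding s by simp
qed

lemma gda_contract_abs:
  fixes h :: "'a::real_inner \<Rightarrow> real" and Dh :: "'a \<Rightarrow> 'a"
  assumes sc: "\<And>y z. h y + Dh y \<bullet> (z - y) + \<mu> / 2 * norm (z - y) ^ 2 \<le> h z"
      and sm: "\<And>y z. h z \<le> h y + Dh y \<bullet> (z - y) + L / 2 * norm (z - y) ^ 2"
      and mu: "0 < \<mu>" "\<mu> \<le> L" and crit: "Dh ys = 0"
  shows "norm (y - (2 / (L + \<mu>)) *\<^sub>R Dh y - ys) \<le> (L - \<mu>) / (L + \<mu>) * norm (y - ys)"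
proof -
  define P where "P z = h z - \<mu> / 2 * norm z ^ 2" for z
  define DP where "DP z = Dh z - \<mu> *\<^sub>R z" for z
  have cvx: "P y + DP y \<bullet> (z - y) \<le> P z" for y z
  proof -
    have "P y + DP y \<bullet> (z - y) = h y + Dh y \<bullet> (z - y) + \<mu> / 2 * norm (z - y) ^ 2 - \<mu> / 2 * norm z ^ 2"
      unfolding P_def DP_def norm_diff_sq
      by (simp add: inner_diff_left inner_diff_right power2_norm_eq_inner inner_commute algebra_simps)
    then show ?thesis using sc[of y z] unfolding P_def by linarith
  qed
  have smo: "P z \<le> P y + DP y \<bullet> (z - y) + (L - \<mu>) / 2 * norm (z - y) ^ 2" for y z
  proof -
    have "P y + DP y \<bullet> (z - y) + (L - \<mu>) / 2 * norm (z - y) ^ 2 = h y + Dh y \<bullet> (z - y) + L / 2 * norm (z - y) ^ 2 - \<mu> / 2 * norm z ^ 2"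
      unfolding P_def DP_def norm_diff_sq
      by (simp add: inner_diff_left inner_diff_right power2_norm_eq_inner inner_commute field_simps)
    then show ?thesis using sm[of z y] unfolding P_def by linarith
  qed
  define u where "u = y - ys"
  define w where "w = Dh y"
  have cc: "norm (DP y - DP ys) ^ 2 \<le> (L - \<mu>) * ((DP y - DP ys) \<bullet> (y - ys))"
    by (rule cocoercive_abs[OF cvx smo]) (use mu in simp)
  have e: "DP y - DP ys = w - \<mu> *\<^sub>R u" by (simp add: DP_def crit w_def u_def algebra_simps)
  have cc2: "norm (w - \<mu> *\<^sub>R u) ^ 2 \<le> (L - \<mu>) * ((w - \<mu> *\<^sub>R u) \<bullet> u)"
    using cc unfolding e u_def .
  define A where "A = norm u ^ 2"
  define B where "B = w \<bullet> u"
  define C where "C = norm w ^ 2"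
  have eq1: "norm (w - \<mu> *\<^sub>R u) ^ 2 = C - 2 * \<mu> * B + \<mu> ^ 2 * A"
    unfolding A_def B_def C_def norm_diff_sq by (simp add: power_mult_distrib inner_commute)
  have eq2: "(w - \<mu> *\<^sub>R u) \<bullet> u = B - \<mu> * A"
    unfolding A_def B_def by (simp add: inner_diff_left power2_norm_eq_inner)
  have i0: "C - 2 * \<mu> * B + \<mu> ^ 2 * A \<le> (L - \<mu>) * (B - \<mu> * A)"
    using cc2 unfolding eq1 eq2 .
  have e1: "(L - \<mu>) * (B - \<mu> * A) = L * B - L * \<mu> * A - \<mu> * B + \<mu> ^ 2 * A"
    by (simp add: algebra_simps power2_eq_square)
  have e2: "(L + \<mu>) * B = L * B + \<mu> * B" by (simp add: algebra_simps)
  have ineq: "C + L * \<mu> * A \<le> (L + \<mu>) * B"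
    using i0 unfolding e1 e2 by linarith
  define S where "S = L + \<mu>"
  have Sp: "S > 0" using mu by (simp add: S_def)
  have eqv: "y - (2 / (L + \<mu>)) *\<^sub>R Dh y - ys = u - (2 / S) *\<^sub>R w" by (simp add: u_def w_def S_def)
  have nrm0: "norm (u - (2 / S) *\<^sub>R w) ^ 2 = A - 4 / S * B + 4 / S ^ 2 * C"
    unfolding norm_diff_sq A_def B_def C_def
    by (simp add: power_mult_distrib inner_commute power2_eq_square)
  have nrm: "norm (y - (2 / (L + \<mu>)) *\<^sub>R Dh y - ys) ^ 2 = A - 4 / S * B + 4 / S ^ 2 * C"
    unfolding eqv by (rule nrm0)
  have "S ^ 2 * (A - 4 / S * B + 4 / S ^ 2 * C) = S ^ 2 * A - 4 * (S * B) + 4 * C"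
    using Sp by (simp add: field_simps power2_eq_square)
  also have "\<dots> \<le> S ^ 2 * A - 4 * (C + L * \<mu> * A) + 4 * C"
    using ineq unfolding S_def by simp
  also have "\<dots> = (L - \<mu>) ^ 2 * A"
    unfolding S_def by (simp add: power2_eq_square algebra_simps)
  also have "\<dots> = S ^ 2 * (((L - \<mu>) / (L + \<mu>)) ^ 2 * A)"
    using Sp unfolding S_def[symmetric] by (simp add: power_divide)
  finally have "A - 4 / S * B + 4 / S ^ 2 * C \<le> ((L - \<mu>) / (L + \<mu>)) ^ 2 * A"
    using Sp by (simp add: mult_le_cancel_left_pos)
  then have "norm (y - (2 / (L + \<mu>)) *\<^sub>R Dh y - ys) ^ 2 \<le> ((L - \<mu>) / (L + \<mu>) * norm (y - ys)) ^ 2"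
    unfolding nrm A_def u_def by (simp add: power_mult_distrib power_divide)
  then show ?thesis
    by (rule power2_le_imp_le) (use mu in simp)
qed


context SAloc begin

lemma F_descent_upper: "F (p + q) \<le> F p + gr p \<bullet> q + L1 / 2 * norm q ^ 2"
proof -
  let ?\<phi> = "\<lambda>\<tau>. F (p + \<tau> *\<^sub>R q)"
  let ?\<phi>' = "\<lambda>\<tau>. gr (p + \<tau> *\<^sub>R q) \<bullet> q"
  have "?\<phi> 1 \<le> ?\<phi> 0 + ?\<phi>' 0 + (L1 * norm q ^ 2) / 2"
  proof (rule taylor1_upper)
    fix t show "(?\<phi> has_real_derivative ?\<phi>' t) (at t)" by (rule F_line)
  next
    fix t :: real assume t: "0 \<le> t" "t \<le> 1"
    have "?\<phi>' t - ?\<phi>' 0 = (gr (p + t *\<^sub>R q) - gr p) \<bullet> q" by (simp add: inner_diff_left)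
    also have "\<dots> \<le> norm (gr (p + t *\<^sub>R q) - gr p) * norm q" by (rule norm_cauchy_schwarz)
    also have "\<dots> \<le> L1 * norm (p + t *\<^sub>R q - p) * norm q"
      by (intro mult_right_mono gr_lip) simp
    also have "\<dots> = L1 * norm q ^ 2 * t" using t by (simp add: power2_eq_square)
    finally show "?\<phi>' t - ?\<phi>' 0 \<le> L1 * norm q ^ 2 * t" .
  qed
  then show ?thesis by simp
qed

lemma F_descent_lower: "F (p + q) \<ge> F p + gr p \<bullet> q - L1 / 2 * norm q ^ 2"
proof -
  let ?\<phi> = "\<lambda>\<tau>. - F (p + \<tau> *\<^sub>R q)"
  let ?\<phi>' = "\<lambda>\<tau>. - (gr (p + \<tau> *\<^sub>R q) \<bullet> q)"
  have "?\<phi> 1 \<le> ?\<phi> 0 + ?\<phi>' 0 + (L1 * norm q ^ 2) / 2"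
  proof (rule taylor1_upper)
    fix t show "(?\<phi> has_real_derivative ?\<phi>' t) (at t)"
      using F_line[of p q t] by (auto intro!: derivative_eq_intros)
  next
    fix t :: real assume t: "0 \<le> t" "t \<le> 1"
    have "?\<phi>' t - ?\<phi>' 0 = (gr p - gr (p + t *\<^sub>R q)) \<bullet> q" by (simp add: inner_diff_left)
    also have "\<dots> \<le> norm (gr p - gr (p + t *\<^sub>R q)) * norm q" by (rule norm_cauchy_schwarz)
    also have "\<dots> \<le> L1 * norm (p - (p + t *\<^sub>R q)) * norm q"
      by (intro mult_right_mono gr_lip) simp
    also have "\<dots> = L1 * norm q ^ 2 * t" using t by (simp add: power2_eq_square)
    finally show "?\<phi>' t - ?\<phi>' 0 \<le> L1 * norm q ^ 2 * t" .
  qed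
  then show ?thesis by simp
qed

lemma f_F: "f x y = F (x, y)" by (simp add: F_def)

lemma f_upper: "f x (y + v) \<le> f x y + g2 x y \<bullet> v + L1 / 2 * norm v ^ 2"
  using F_descent_upper[of "(x, y)" "(0, v)"] by (simp add: F_def gr_def)

lemma f_lower: "f x (y + v) \<ge> f x y + g2 x y \<bullet> v - L1 / 2 * norm v ^ 2"
  using F_descent_lower[of "(x, y)" "(0, v)"] by (simp add: F_def gr_def)

lemma SC: "f x z \<le> f x y + g2 x y \<bullet> (z - y) - \<mu> / 2 * norm (z - y) ^ 2"
proof -
  define D where "D = norm (z - y) ^ 2"
  define G where "G = g2 x y \<bullet> (z - y)"
  have "f x z + \<mu> / 2 * D \<le> (f x y + G) + ((L1 + \<mu>) / 2 * D) * t" if t: "0 < t" "t \<le> 1" for t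
  proof -
    have c: "t * f x z + (1 - t) * f x y + \<mu> / 2 * t * (1 - t) * D \<le> f x (t *\<^sub>R z + (1 - t) *\<^sub>R y)"
      using SA_conc[rule_format, of t x z y] t unfolding D_def by simp
    have e: "t *\<^sub>R z + (1 - t) *\<^sub>R y = y + t *\<^sub>R (z - y)" by (simp add: algebra_simps)
    have u: "f x (y + t *\<^sub>R (z - y)) \<le> f x y + t * G + L1 / 2 * t ^ 2 * D"
      using f_upper[of x y "t *\<^sub>R (z - y)"] unfolding G_def D_def by (simp add: power_mult_distrib)
    have "t * (f x z - f x y + \<mu> / 2 * (1 - t) * D - G - L1 / 2 * t * D) \<le> 0"
      using c u unfolding e by (simp add: algebra_simps power2_eq_square)
    then have "f x z - f x y + \<mu> / 2 * (1 - t) * D - G - L1 / 2 * t * D \<le> 0"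
      using t by (simp add: mult_le_0_iff)
    then show ?thesis by (simp add: field_simps)
  qed
  then have "f x z + \<mu> / 2 * D \<le> f x y + G" by (rule le_of_forall_pos)
  then show ?thesis unfolding D_def G_def by simp
qed

lemma strong_mono: "(g2 x y - g2 x z) \<bullet> (y - z) \<le> - \<mu> * norm (y - z) ^ 2"
proof -
  have 1: "f x z \<le> f x y + g2 x y \<bullet> (z - y) - \<mu> / 2 * norm (z - y) ^ 2" by (rule SC)
  have 2: "f x y \<le> f x z + g2 x z \<bullet> (y - z) - \<mu> / 2 * norm (y - z) ^ 2" by (rule SC)
  have n: "norm (z - y) = norm (y - z)" by (rule norm_minus_commute)
  have i: "g2 x y \<bullet> (z - y) = - (g2 x y \<bullet> (y - z))" by (simp add: inner_diff_right)
  show ?thesis using 1 2 unfolding n i by (simp add: inner_diff_left)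
qed

lemma g_lip_y: "norm (g2 x y - g2 x z) \<le> L1 * norm (y - z)"
  and g1_lip_y: "norm (g1 x y - g1 x z) \<le> L1 * norm (y - z)"
  and g_lip_x: "norm (g2 x y - g2 x' y) \<le> L1 * norm (x - x')"
proof -
  have a: "norm (gr (x, y) - gr (x, z)) \<le> L1 * norm (y - z)"
    using gr_lip[of "(x, y)" "(x, z)"] by simp
  show "norm (g2 x y - g2 x z) \<le> L1 * norm (y - z)"
    using a norm_snd_le[of "g2 x y - g2 x z" "g1 x y - g1 x z"] by (simp add: gr_def)
  show "norm (g1 x y - g1 x z) \<le> L1 * norm (y - z)"
    using a norm_fst_le[of "g1 x y - g1 x z" "g2 x y - g2 x z"] by (simp add: gr_def)
  have b: "norm (gr (x, y) - gr (x', y)) \<le> L1 * norm (x - x')"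
    using gr_lip[of "(x, y)" "(x', y)"] by simp
  show "norm (g2 x y - g2 x' y) \<le> L1 * norm (x - x')"
    using b norm_snd_le[of "g2 x y - g2 x' y" "g1 x y - g1 x' y"] by (simp add: gr_def)
qed

lemma crit: assumes "\<forall>y'. f x y' \<le> f x y" shows "g2 x y = 0"
proof -
  define w where "w = g2 x y"
  have "norm w ^ 2 \<le> 0 + (L1 / 2 * norm w ^ 2) * t" if t: "0 < t" "t \<le> 1" for t
  proof -
    have e1: "g2 x y \<bullet> (t *\<^sub>R w) = t * norm w ^ 2" by (simp add: w_def power2_norm_eq_inner)
    have e2: "norm (t *\<^sub>R w) ^ 2 = t ^ 2 * norm w ^ 2" using t by (simp add: power_mult_distrib)
    have l: "f x (y + t *\<^sub>R w) \<ge> f x y + g2 x y \<bullet> (t *\<^sub>R w) - L1 / 2 * norm (t *\<^sub>R w) ^ 2" by (rule f_lower)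
    have m: "f x (y + t *\<^sub>R w) \<le> f x y" using assms by blast
    have "t * norm w ^ 2 \<le> L1 / 2 * (t ^ 2 * norm w ^ 2)" using l m unfolding e1 e2 by linarith
    then have "t * (norm w ^ 2 - L1 / 2 * norm w ^ 2 * t) \<le> 0"
      by (simp add: algebra_simps power2_eq_square)
    then show ?thesis using t by (simp add: mult_le_0_iff)
  qed
  then have "norm w ^ 2 \<le> 0" by (rule le_of_forall_pos)
  then show ?thesis unfolding w_def by simp
qed

lemma f_cont: "continuous_on UNIV (f x)"
proof -
  have cF: "continuous_on UNIV F"
    using F_deriv by (intro has_derivative_continuous_on) (auto intro: has_derivative_at_withinI)
  have "continuous_on UNIV (\<lambda>y. F (x, y))"
    by (rule continuous_on_compose2[OF cF]) (auto intro!: continuous_intros)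
  then show ?thesis by (simp add: F_def[abs_def])
qed

lemma max_exists: "\<exists>y. \<forall>y'. f x y' \<le> f x y"
proof -
  define S where "S = {y. f x 0 \<le> f x y}"
  define R where "R = 2 * norm (g2 x 0) / \<mu>"
  have sub: "S \<subseteq> cball 0 R"
  proof
    fix y assume "y \<in> S"
    then have "f x 0 \<le> f x y" by (simp add: S_def)
    moreover have "f x y \<le> f x 0 + g2 x 0 \<bullet> (y - 0) - \<mu> / 2 * norm (y - 0) ^ 2" by (rule SC)
    ultimately have "\<mu> / 2 * norm y ^ 2 \<le> g2 x 0 \<bullet> y" by simp
    also have "\<dots> \<le> norm (g2 x 0) * norm y" by (rule norm_cauchy_schwarz)
    finally have "norm y * (\<mu> / 2 * norm y) \<le> norm y * norm (g2 x 0)" by (simp add: power2_eq_square algebra_simps)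
    then have "\<mu> / 2 * norm y \<le> norm (g2 x 0) \<or> norm y = 0"
      using mult_le_cancel_left_pos[of "norm y" "\<mu> / 2 * norm y" "norm (g2 x 0)"]
      by (cases "norm y = 0") auto
    moreover have "\<mu> / 2 * norm y \<le> norm (g2 x 0) \<Longrightarrow> norm y \<le> R"
      using mu_pos unfolding R_def by (simp add: field_simps)
    ultimately have "norm y \<le> R" using mu_pos unfolding R_def by auto
    then show "y \<in> cball 0 R" by simp
  qed
  have cl: "closed S" unfolding S_def
    by (rule closed_Collect_le) (use f_cont in auto)
  have "compact S"
    using sub cl by (meson bounded_cball bounded_subset compact_eq_bounded_closed)
  moreover have "S \<noteq> {}" by (auto simp: S_def)
  moreover have "continuous_on S (f x)" using f_cont continuous_on_subset by blast
  ultimately have "\<exists>y\<in>S. \<forall>z\<in>S. f x z \<le> f x y" by (rule continuous_attains_sup)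
  then obtain y where y: "y \<in> S" "\<And>z. z \<in> S \<Longrightarrow> f x z \<le> f x y" by blast
  have "f x z \<le> f x y" for z
  proof (cases "z \<in> S")
    case True then show ?thesis using y by blast
  next
    case False then show ?thesis using y(1) by (auto simp: S_def)
  qed
  then show ?thesis by blast
qed

lemma max_unique: assumes "\<forall>y'. f x y' \<le> f x y" "\<forall>y'. f x y' \<le> f x z" shows "y = z"
proof -
  have "f x z \<le> f x y + g2 x y \<bullet> (z - y) - \<mu> / 2 * norm (z - y) ^ 2" by (rule SC)
  moreover have "g2 x y = 0" using crit assms(1) by blast
  moreover have "f x y \<le> f x z" using assms(2) by blast
  ultimately have "\<mu> / 2 * norm (z - y) ^ 2 \<le> 0" by simp
  then have "norm (z - y) ^ 2 \<le> 0" using mu_pos by (simp add: mult_le_0_iff)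
  then show ?thesis by simp
qed

lemma ystar_max: "\<forall>y'. f x y' \<le> f x (ystar f x)"
proof -
  have "\<exists>!y. \<forall>y'. f x y' \<le> f x y" using max_exists max_unique by blast
  then show ?thesis unfolding ystar_def by (rule theI')
qed

lemma g2_ystar: "g2 x (ystar f x) = 0"
  using crit ystar_max by blast

lemma Phi_eq: "Phi f x = f x (ystar f x)"
  unfolding Phi_def using ystar_max by (intro cSup_eq_maximum) auto

lemma ystar_lip: "norm (ystar f x - ystar f x') \<le> L1 / \<mu> * norm (x - x')"
proof -
  define a where "a = ystar f x"
  define b where "b = ystar f x'"
  have "(g2 x' a - g2 x' b) \<bullet> (a - b) \<le> - \<mu> * norm (a - b) ^ 2" by (rule strong_mono)
  then have "\<mu> * norm (a - b) ^ 2 \<le> (g2 x a - g2 x' a) \<bullet> (a - b)"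
    using g2_ystar[of x] g2_ystar[of x'] unfolding a_def b_def by (simp add: inner_diff_left)
  also have "\<dots> \<le> norm (g2 x a - g2 x' a) * norm (a - b)" by (rule norm_cauchy_schwarz)
  also have "\<dots> \<le> L1 * norm (x - x') * norm (a - b)" by (intro mult_right_mono g_lip_x) simp
  finally have "norm (a - b) * (\<mu> * norm (a - b)) \<le> norm (a - b) * (L1 * norm (x - x'))"
    by (simp add: power2_eq_square algebra_simps)
  then have "\<mu> * norm (a - b) \<le> L1 * norm (x - x') \<or> norm (a - b) = 0"
    using mult_le_cancel_left_pos[of "norm (a - b)" "\<mu> * norm (a - b)" "L1 * norm (x - x')"]
    by (cases "norm (a - b) = 0") auto
  moreover have "\<mu> * norm (a - b) \<le> L1 * norm (x - x') \<Longrightarrow> norm (a - b) \<le> L1 / \<mu> * norm (x - x')"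
    using mu_pos by (simp add: field_simps)
  moreover have "0 \<le> L1 / \<mu> * norm (x - x')" using mu_pos L1_nonneg by simp
  ultimately show ?thesis unfolding a_def b_def by auto
qed

lemma mu_le_L1: "\<mu> \<le> L1"
proof -
  obtain v :: "real^'n" where v: "v \<noteq> 0" using vector_choose_size[of 1] by (metis norm_zero zero_neq_one)
  have 1: "f x (y + v) \<le> f x y + g2 x y \<bullet> v - \<mu> / 2 * norm v ^ 2" for x y
    using SC[of x "y + v" y] by simp
  have 2: "f x (y + v) \<ge> f x y + g2 x y \<bullet> v - L1 / 2 * norm v ^ 2" for x y by (rule f_lower)
  have "\<mu> / 2 * norm v ^ 2 \<le> L1 / 2 * norm v ^ 2" using 1[of 0 0] 2[of 0 0] by linarith
  then show ?thesis using v by simp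
qed

lemma gda_step: "norm (y + (2 / (L1 + \<mu>)) *\<^sub>R g2 x y - ystar f x) \<le> (L1 - \<mu>) / (L1 + \<mu>) * norm (y - ystar f x)"
proof -
  have "norm (y - (2 / (L1 + \<mu>)) *\<^sub>R (\<lambda>z. - g2 x z) y - ystar f x) \<le> (L1 - \<mu>) / (L1 + \<mu>) * norm (y - ystar f x)"
  proof (rule gda_contract_abs[where h = "\<lambda>z. - f x z"])
    fix y z
    show "- f x y + (- g2 x y) \<bullet> (z - y) + \<mu> / 2 * norm (z - y) ^ 2 \<le> - f x z"
      using SC[of x z y] by simp
    show "- f x z \<le> - f x y + (- g2 x y) \<bullet> (z - y) + L1 / 2 * norm (z - y) ^ 2"
      using f_lower[of x y "z - y"] by simp
  qed (use mu_pos mu_le_L1 g2_ystar in auto)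
  then show ?thesis by simp
qed

lemma gda_iter: "norm (((\<lambda>v. v + (2 / (L1 + \<mu>)) *\<^sub>R g2 x v) ^^ k) y - ystar f x)
   \<le> ((L1 - \<mu>) / (L1 + \<mu>)) ^ k * norm (y - ystar f x)"
proof (induction k)
  case 0 then show ?case by simp
next
  case (Suc k)
  have r: "0 \<le> (L1 - \<mu>) / (L1 + \<mu>)" using mu_pos mu_le_L1 by simp
  have "norm (((\<lambda>v. v + (2 / (L1 + \<mu>)) *\<^sub>R g2 x v) ^^ Suc k) y - ystar f x)
     \<le> (L1 - \<mu>) / (L1 + \<mu>) * norm (((\<lambda>v. v + (2 / (L1 + \<mu>)) *\<^sub>R g2 x v) ^^ k) y - ystar f x)"
    using gda_step by simp
  also have "\<dots> \<le> (L1 - \<mu>) / (L1 + \<mu>) * (((L1 - \<mu>) / (L1 + \<mu>)) ^ k * norm (y - ystar f x))"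
    by (rule mult_left_mono[OF Suc.IH r])
  finally show ?case by simp
qed

end

lemma cubic_opt:
  fixes g :: "real^'m" and G :: "real^'m^'m"
  assumes eta: "0 < \<eta>" and opt: "\<And>u. cubic_model g G \<eta> s \<le> cubic_model g G \<eta> u"
  shows "g \<bullet> s + 1 / 2 * (s \<bullet> (G *v s)) \<le> - 1 / (4 * \<eta>) * norm s ^ 3"
proof -
  define a where "a = g \<bullet> s"
  define b where "b = s \<bullet> (G *v s)"
  define r where "r = norm s"
  define M where "M = 1 / \<eta>"
  have m_scale: "cubic_model g G \<eta> (\<tau> *\<^sub>R s) = \<tau> * a + \<tau> ^ 2 * b / 2 + M / 6 * \<bar>\<tau>\<bar> ^ 3 * r ^ 3" for \<tau>
    unfolding cubic_model_def a_def b_def r_def M_def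
    by (simp add: matrix_vector_mult_scaleR power_mult_distrib power2_eq_square algebra_simps)
  define \<psi> where "\<psi> \<tau> = \<tau> * a + \<tau> ^ 2 * b / 2 + M / 6 * \<tau> ^ 3 * r ^ 3" for \<tau>
  have d: "(\<psi> has_real_derivative (a + b + M / 2 * r ^ 3)) (at 1)"
    unfolding \<psi>_def by (auto intro!: derivative_eq_intros simp: field_simps)
  have lm: "\<forall>y. \<bar>1 - y\<bar> < 1 / 2 \<longrightarrow> \<psi> 1 \<le> \<psi> y"
  proof (intro allI impI)
    fix y :: real assume "\<bar>1 - y\<bar> < 1 / 2"
    moreover have "1 - y \<le> \<bar>1 - y\<bar>" by (rule abs_ge_self)
    ultimately have y: "y > 0" by linarith
    have "cubic_model g G \<eta> (1 *\<^sub>R s) \<le> cubic_model g G \<eta> (y *\<^sub>R s)" using opt by simp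
    then show "\<psi> 1 \<le> \<psi> y" unfolding m_scale \<psi>_def using y by simp
  qed
  have z: "a + b + M / 2 * r ^ 3 = 0"
    by (rule DERIV_local_min[OF d _ lm]) simp
  have "cubic_model g G \<eta> (1 *\<^sub>R s) \<le> cubic_model g G \<eta> ((-1) *\<^sub>R s)" using opt by simp
  then have an: "a \<le> 0" unfolding m_scale by simp
  have "a + 1 / 2 * b = a / 2 + (a + b + M / 2 * r ^ 3) / 2 - M / 4 * r ^ 3" by (simp add: field_simps)
  also have "\<dots> \<le> - M / 4 * r ^ 3" using z an by simp
  finally show ?thesis unfolding a_def b_def r_def M_def by simp
qed

context SAloc begin

lemma H22_negdef: "d \<bullet> (H22 x y *v d) \<le> - \<mu> * norm d ^ 2"
proof -
  have "d \<bullet> (H22 x y *v d) \<le> - \<mu> * norm d ^ 2 + (L2 * norm d ^ 3 / 2) * h" if h: "0 < h" "h \<le> 1" for h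
  proof -
    have t: "(0, d) \<bullet> gr ((x, y) + (0, h *\<^sub>R d)) \<ge> (0, d) \<bullet> gr (x, y) + (0, d) \<bullet> Hv (x, y) (0, h *\<^sub>R d)
       - L2 * norm ((0::real^'m), h *\<^sub>R d) * nn (0, d) * nn (0, h *\<^sub>R d) / 2"
      by (rule taylor1_gr_lower)
    have t': "g2 x (y + h *\<^sub>R d) \<bullet> d - g2 x y \<bullet> d \<ge> h * (d \<bullet> (H22 x y *v d)) - L2 * h ^ 2 * norm d ^ 3 / 2"
      using t h by (simp add: gr_def Hv_def nn_def matrix_vector_mult_scaleR power2_eq_square power3_eq_cube algebra_simps inner_commute)
    have sm: "(g2 x (y + h *\<^sub>R d) - g2 x y) \<bullet> (y + h *\<^sub>R d - y) \<le> - \<mu> * norm (y + h *\<^sub>R d - y) ^ 2"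
      by (rule strong_mono)
    then have "h * (g2 x (y + h *\<^sub>R d) \<bullet> d - g2 x y \<bullet> d) \<le> h * (- \<mu> * h * norm d ^ 2)"
      using h by (simp add: inner_diff_left power_mult_distrib power2_eq_square algebra_simps)
    then have "g2 x (y + h *\<^sub>R d) \<bullet> d - g2 x y \<bullet> d \<le> - \<mu> * h * norm d ^ 2"
      by (rule mult_left_le_imp_le[OF _ h(1)])
    then have "h * (d \<bullet> (H22 x y *v d)) \<le> h * (- \<mu> * norm d ^ 2 + (L2 * norm d ^ 3 / 2) * h)"
      using t' by (simp add: algebra_simps power2_eq_square)
    then show ?thesis by (rule mult_left_le_imp_le[OF _ h(1)])
  qed
  then show ?thesis by (rule le_of_forall_pos)
qed

lemma H21_bound: "norm (H21 x y *v s) \<le> L1 * norm s"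
proof -
  define w where "w = H21 x y *v s"
  have "norm w ^ 2 \<le> L1 * norm s * norm w + (L2 * norm s ^ 2 * norm w / 2) * h" if h: "0 < h" "h \<le> 1" for h
  proof -
    have t: "(0, w) \<bullet> gr ((x, y) + (h *\<^sub>R s, 0)) \<ge> (0, w) \<bullet> gr (x, y) + (0, w) \<bullet> Hv (x, y) (h *\<^sub>R s, 0)
       - L2 * norm (h *\<^sub>R s, (0::real^'n)) * nn (0, w) * nn (h *\<^sub>R s, 0) / 2"
      by (rule taylor1_gr_lower)
    have t'': "h * (w \<bullet> w) \<le> w \<bullet> (g2 (x + h *\<^sub>R s) y - g2 x y) + L2 * h ^ 2 * norm s ^ 2 * norm w / 2"
      using t h by (simp add: gr_def Hv_def nn_def matrix_vector_mult_scaleR power2_eq_square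
          inner_diff_right algebra_simps w_def[symmetric])
    have t': "h * norm w ^ 2 \<le> w \<bullet> (g2 (x + h *\<^sub>R s) y - g2 x y) + L2 * h ^ 2 * norm s ^ 2 * norm w / 2"
      using t'' by (simp add: power2_norm_eq_inner)
    have "w \<bullet> (g2 (x + h *\<^sub>R s) y - g2 x y) \<le> norm w * norm (g2 (x + h *\<^sub>R s) y - g2 x y)"
      by (rule norm_cauchy_schwarz)
    also have "\<dots> \<le> norm w * (L1 * norm (x + h *\<^sub>R s - x))" by (intro mult_left_mono g_lip_x) simp
    also have "\<dots> = h * (L1 * norm s * norm w)" using h by simp
    finally have "h * norm w ^ 2 \<le> h * (L1 * norm s * norm w + (L2 * norm s ^ 2 * norm w / 2) * h)"
      using t' by (simp add: algebra_simps power2_eq_square)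
    then show ?thesis using h by (simp add: mult_le_cancel_left_pos)
  qed
  then have "norm w ^ 2 \<le> L1 * norm s * norm w" by (rule le_of_forall_pos)
  then have "norm w * norm w \<le> norm w * (L1 * norm s)" by (simp add: power2_eq_square algebra_simps)
  then have "norm w \<le> L1 * norm s \<or> norm w = 0"
    using mult_le_cancel_left_pos[of "norm w" "norm w" "L1 * norm s"] by (cases "norm w = 0") auto
  then show ?thesis unfolding w_def[symmetric] using L1_nonneg by auto
qed

lemma H22_inv: "H22 x y *v (matrix_inv (H22 x y) *v b) = b"
proof -
  let ?A = "H22 x y"
  have "inj ((*v) ?A)"
  proof -
    have "v = 0" if "?A *v v = 0" for v
    proof -
      have "v \<bullet> (?A *v v) \<le> - \<mu> * norm v ^ 2" by (rule H22_negdef)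
      then have "\<mu> * norm v ^ 2 \<le> 0" using that by simp
      then have "norm v ^ 2 \<le> 0" using mu_pos by (simp add: mult_le_0_iff)
      then show ?thesis by simp
    qed
    then show ?thesis using vec.inj_iff_eq_0 by blast
  qed
  then have "\<exists>B. B ** ?A = mat 1" using matrix_left_invertible_injective by blast
  then have "invertible ?A" using invertible_left_inverse by blast
  then have "\<exists>A'. ?A ** A' = mat 1 \<and> A' ** ?A = mat 1" unfolding invertible_def .
  then have "?A ** matrix_inv ?A = mat 1 \<and> matrix_inv ?A ** ?A = mat 1"
    unfolding matrix_inv_def by (rule someI_ex)
  then show ?thesis by (simp add: matrix_vector_mul_assoc)
qed

definition "eG x y s = matrix_inv (H22 x y) *v (H21 x y *v s)"

lemma H22_eG: "H22 x y *v eG x y s = H21 x y *v s"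
  unfolding eG_def by (rule H22_inv)

lemma Gquad: "s \<bullet> (Gmat H11 H12 H21 H22 x y *v s) = s \<bullet> (H11 x y *v s) - (H21 x y *v s) \<bullet> eG x y s"
proof -
  have "(H12 x y ** matrix_inv (H22 x y) ** H21 x y) *v s = H12 x y *v eG x y s"
    unfolding eG_def by (simp add: matrix_vector_mul_assoc matrix_mul_assoc)
  then have "s \<bullet> ((H12 x y ** matrix_inv (H22 x y) ** H21 x y) *v s) = eG x y s \<bullet> (H21 x y *v s)"
    by (simp add: sym12)
  then show ?thesis unfolding Gmat_def
    by (simp add: matrix_vector_mult_diff_rdistrib inner_diff_right inner_commute)
qed

lemma completing: "2 * ((H21 x y *v s) \<bullet> d) + d \<bullet> (H22 x y *v d) \<le> - ((H21 x y *v s) \<bullet> eG x y s)"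
proof -
  define e where "e = eG x y s"
  define b where "b = H21 x y *v s"
  have be: "H22 x y *v e = b" unfolding e_def b_def by (rule H22_eG)
  have "(d + e) \<bullet> (H22 x y *v (d + e)) \<le> - \<mu> * norm (d + e) ^ 2" by (rule H22_negdef)
  also have "\<dots> \<le> 0" using mu_pos by simp
  finally have n: "(d + e) \<bullet> (H22 x y *v (d + e)) \<le> 0" .
  have s: "e \<bullet> (H22 x y *v d) = d \<bullet> (H22 x y *v e)" by (rule sym22[symmetric])
  have "(d + e) \<bullet> (H22 x y *v (d + e)) = d \<bullet> (H22 x y *v d) + 2 * (b \<bullet> d) + b \<bullet> e"
    by (simp add: matrix_vector_right_distrib inner_add_left inner_add_right s be inner_commute)
  then show ?thesis using n unfolding e_def[symmetric] b_def[symmetric] by simp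
qed

lemma eG_bound: "norm (eG x y s) \<le> L1 / \<mu> * norm s"
proof -
  define e where "e = eG x y s"
  have "\<mu> * norm e ^ 2 \<le> - (e \<bullet> (H22 x y *v e))" using H22_negdef[of e x y] by simp
  also have "\<dots> = - (e \<bullet> (H21 x y *v s))" unfolding e_def H22_eG ..
  also have "\<dots> \<le> norm e * norm (H21 x y *v s)"
    using norm_cauchy_schwarz[of "-e" "H21 x y *v s"] by simp
  also have "\<dots> \<le> norm e * (L1 * norm s)" by (intro mult_left_mono H21_bound) simp
  finally have "norm e * (\<mu> * norm e) \<le> norm e * (L1 * norm s)" by (simp add: power2_eq_square algebra_simps)
  then have "\<mu> * norm e \<le> L1 * norm s \<or> norm e = 0"
    using mult_le_cancel_left_pos[of "norm e" "\<mu> * norm e" "L1 * norm s"] by (cases "norm e = 0") auto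
  moreover have "\<mu> * norm e \<le> L1 * norm s \<Longrightarrow> norm e \<le> L1 / \<mu> * norm s"
    using mu_pos by (simp add: field_simps)
  moreover have "0 \<le> L1 / \<mu> * norm s" using mu_pos L1_nonneg by simp
  ultimately show ?thesis unfolding e_def by auto
qed

end

context SAloc begin

lemma G_lip:
  "s \<bullet> (Gmat H11 H12 H21 H22 x y *v s) \<le> s \<bullet> (Gmat H11 H12 H21 H22 x y' *v s)
     + L2 * (1 + L1 / \<mu>) ^ 2 * norm (y - y') * norm s ^ 2"
proof -
  define e where "e = eG x y s"
  define b where "b = H21 x y *v s"
  define b' where "b' = H21 x y' *v s"
  define \<delta> where "\<delta> = norm (y - y')"
  have nd: "norm ((x, y) - (x, y')) = \<delta>" by (simp add: \<delta>_def)
  have q1: "s \<bullet> (Gmat H11 H12 H21 H22 x y *v s) = s \<bullet> (H11 x y *v s) - b \<bullet> e"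
    unfolding b_def e_def by (rule Gquad)
  have q2: "s \<bullet> (Gmat H11 H12 H21 H22 x y' *v s) = s \<bullet> (H11 x y' *v s) - b' \<bullet> eG x y' s"
    unfolding b'_def by (rule Gquad)
  have c: "2 * (b' \<bullet> (-e)) + (-e) \<bullet> (H22 x y' *v (-e)) \<le> - (b' \<bullet> eG x y' s)"
    unfolding b'_def by (rule completing)
  have c': "- 2 * (b' \<bullet> e) + e \<bullet> (H22 x y' *v e) \<le> - (b' \<bullet> eG x y' s)"
    using c by (simp add: vec.neg)
  have be: "b \<bullet> e = e \<bullet> (H22 x y *v e)"
    unfolding b_def e_def H22_eG by (simp add: inner_commute)
  have h11: "\<bar>s \<bullet> (H11 x y *v s) - s \<bullet> (H11 x y' *v s)\<bar> \<le> L2 * \<delta> * norm s * norm s"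
    by (rule Hlip_bound) (use SA_H11[rule_format, of x y x y'] nd in simp)
  have h21: "\<bar>e \<bullet> (H21 x y *v s) - e \<bullet> (H21 x y' *v s)\<bar> \<le> L2 * \<delta> * norm e * norm s"
    by (rule Hlip_bound) (use SA_H21[rule_format, of x y x y'] nd in simp)
  have h22: "\<bar>e \<bullet> (H22 x y *v e) - e \<bullet> (H22 x y' *v e)\<bar> \<le> L2 * \<delta> * norm e * norm e"
    by (rule Hlip_bound) (use SA_H22[rule_format, of x y x y'] nd in simp)
  have bb: "b \<bullet> e = e \<bullet> (H21 x y *v s)" "b' \<bullet> e = e \<bullet> (H21 x y' *v s)"
    unfolding b_def b'_def by (simp_all add: inner_commute)
  have "s \<bullet> (Gmat H11 H12 H21 H22 x y *v s) - s \<bullet> (Gmat H11 H12 H21 H22 x y' *v s)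
      \<le> s \<bullet> (H11 x y *v s) - s \<bullet> (H11 x y' *v s) - 2 * (e \<bullet> (H21 x y *v s)) + 2 * (e \<bullet> (H21 x y' *v s))
         + e \<bullet> (H22 x y *v e) - e \<bullet> (H22 x y' *v e)"
    unfolding q1 q2 using c' be bb by linarith
  also have "\<dots> \<le> L2 * \<delta> * norm s * norm s + 2 * (L2 * \<delta> * norm e * norm s) + L2 * \<delta> * norm e * norm e"
    using h11 h21 h22 by (simp add: abs_le_iff)
  also have "\<dots> = L2 * \<delta> * (norm s + norm e) ^ 2" by (simp add: power2_eq_square algebra_simps)
  also have "\<dots> \<le> L2 * \<delta> * ((1 + L1 / \<mu>) * norm s) ^ 2"
  proof -
    have "norm s + norm e \<le> (1 + L1 / \<mu>) * norm s"
      using eG_bound[of x y s] unfolding e_def by (simp add: algebra_simps)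
    then have "(norm s + norm e) ^ 2 \<le> ((1 + L1 / \<mu>) * norm s) ^ 2"
      by (intro power_mono) auto
    then show ?thesis using L2_nonneg by (intro mult_left_mono) (auto simp: \<delta>_def)
  qed
  also have "\<dots> = L2 * (1 + L1 / \<mu>) ^ 2 * norm (y - y') * norm s ^ 2"
    by (simp add: \<delta>_def power_mult_distrib)
  finally show ?thesis by simp
qed

lemma g1_err: "g1 x y \<bullet> s \<le> g1 x y' \<bullet> s + L1 * norm (y - y') * norm s"
proof -
  have "g1 x y \<bullet> s - g1 x y' \<bullet> s = (g1 x y - g1 x y') \<bullet> s" by (simp add: inner_diff_left)
  also have "\<dots> \<le> norm (g1 x y - g1 x y') * norm s" by (rule norm_cauchy_schwarz)
  also have "\<dots> \<le> L1 * norm (y - y') * norm s" by (intro mult_right_mono g1_lip_y) simp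
  finally show ?thesis by simp
qed

lemma Phi_taylor:
  "Phi f (x + s) \<le> Phi f x + g1 x (ystar f x) \<bullet> s
     + 1 / 2 * (s \<bullet> (Gmat H11 H12 H21 H22 x (ystar f x) *v s)) + L2 * (1 + L1 / \<mu>) ^ 3 / 6 * norm s ^ 3"
proof -
  define y0 where "y0 = ystar f x"
  define d where "d = ystar f (x + s) - y0"
  define p where "p = (x, y0)"
  define q where "q = (s, d)"
  have dn: "norm d \<le> L1 / \<mu> * norm s"
    using ystar_lip[of "x + s" x] unfolding d_def y0_def by simp
  have "Phi f (x + s) = F (p + q)"
    by (simp add: Phi_eq F_def p_def q_def d_def)
  also have "\<dots> \<le> F p + gr p \<bullet> q + q \<bullet> Hv p q / 2 + L2 * norm q * nn q ^ 2 / 6"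
    by (rule taylor2_F_upper)
  finally have t: "Phi f (x + s) \<le> F p + gr p \<bullet> q + q \<bullet> Hv p q / 2 + L2 * norm q * nn q ^ 2 / 6" .
  have Fp: "F p = Phi f x" by (simp add: F_def p_def y0_def Phi_eq)
  have grp: "gr p \<bullet> q = g1 x y0 \<bullet> s"
    by (simp add: gr_def p_def q_def inner_prod_def y0_def g2_ystar)
  have hv: "q \<bullet> Hv p q = s \<bullet> (H11 x y0 *v s) + 2 * ((H21 x y0 *v s) \<bullet> d) + d \<bullet> (H22 x y0 *v d)"
    by (simp add: Hv_def p_def q_def inner_prod_def inner_add_right sym12 inner_commute)
  have hv2: "q \<bullet> Hv p q \<le> s \<bullet> (Gmat H11 H12 H21 H22 x y0 *v s)"
    unfolding hv Gquad using completing[of x y0 s d] by simp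
  have nq: "nn q \<le> (1 + L1 / \<mu>) * norm s"
    using dn by (simp add: nn_def q_def algebra_simps)
  have rem: "L2 * norm q * nn q ^ 2 \<le> L2 * (1 + L1 / \<mu>) ^ 3 * norm s ^ 3"
  proof -
    have "norm q * nn q ^ 2 \<le> nn q * nn q ^ 2"
      by (intro mult_right_mono norm_le_nn) simp
    also have "\<dots> = nn q ^ 3" by (simp add: power2_eq_square power3_eq_cube)
    also have "\<dots> \<le> ((1 + L1 / \<mu>) * norm s) ^ 3"
      by (intro power_mono nq nn_nonneg)
    finally show ?thesis using L2_nonneg by (simp add: power_mult_distrib mult_left_mono mult.assoc)
  qed
  have a1: "q \<bullet> Hv p q / 2 \<le> 1 / 2 * (s \<bullet> (Gmat H11 H12 H21 H22 x y0 *v s))" using hv2 by simp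
  have a2: "L2 * norm q * nn q ^ 2 / 6 \<le> L2 * (1 + L1 / \<mu>) ^ 3 / 6 * norm s ^ 3" using rem by simp
  show ?thesis using t a1 a2 unfolding Fp grp y0_def by linarith
qed

end

lemma rate:
  fixes L \<mu> A :: real
  assumes mu: "0 < \<mu>" "\<mu> \<le> L" and A: "0 < A" and N: "L / \<mu> * ln A \<le> real N"
  shows "((L - \<mu>) / (L + \<mu>)) ^ N * A \<le> 1"
proof (cases "L = \<mu>")
  case True
  show ?thesis
  proof (cases N)
    case 0
    then have "ln A \<le> 0" using N True mu by simp
    then have "A \<le> 1" using A by simp
    then show ?thesis using 0 by simp
  next
    case (Suc k) then show ?thesis using True by simp
  qed
next
  case False
  then have L: "\<mu> < L" using mu by simp
  define \<rho> where "\<rho> = (L - \<mu>) / (L + \<mu>)"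
  have rp: "0 < \<rho>" using L mu by (simp add: \<rho>_def)
  have "ln \<rho> \<le> \<rho> - 1" using rp by (rule ln_le_minus_one)
  also have "\<rho> - 1 = - 2 * \<mu> / (L + \<mu>)" using L mu by (simp add: \<rho>_def field_simps)
  also have "\<dots> \<le> - \<mu> / L"
    using L mu by (simp add: field_simps)
  finally have lr: "ln \<rho> \<le> - \<mu> / L" .
  have "ln A \<le> \<mu> / L * real N"
  proof -
    have "\<mu> / L * (L / \<mu> * ln A) \<le> \<mu> / L * real N"
      using N L mu by (intro mult_left_mono) auto
    then show ?thesis using L mu by simp
  qed
  moreover have "real N * ln \<rho> \<le> real N * (- \<mu> / L)"
    using lr by (intro mult_left_mono) auto
  moreover have "real N * (- \<mu> / L) = - (\<mu> / L * real N)" by simp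
  ultimately have "real N * ln \<rho> + ln A \<le> 0" by linarith
  then have "ln (\<rho> ^ N * A) \<le> 0"
    using rp A by (simp add: ln_mult ln_realpow)
  then have "\<rho> ^ N * A \<le> 1" using rp A by simp
  then show ?thesis by (simp add: \<rho>_def)
qed

lemma regime:
  assumes "1 \<le> t" "enat t < Tprime \<epsilon> s"
  shows "\<epsilon> < max (norm (s (t - 1))) (norm (s t))"
proof (rule ccontr)
  assume "\<not> \<epsilon> < max (norm (s (t - 1))) (norm (s t))"
  then have P: "t \<ge> 1 \<and> max (norm (s (t - 1))) (norm (s t)) \<le> \<epsilon>" using assms(1) by (auto simp: not_less max_def split: if_splits)
  then have ex: "\<exists>t\<ge>1. max (norm (s (t - 1))) (norm (s t)) \<le> \<epsilon>" by blast
  then have "Tprime \<epsilon> s = enat (LEAST t. t \<ge> 1 \<and> max (norm (s (t - 1))) (norm (s t)) \<le> \<epsilon>)"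
    unfolding Tprime_def by simp
  moreover have "(LEAST t. t \<ge> 1 \<and> max (norm (s (t - 1))) (norm (s t)) \<le> \<epsilon>) \<le> t"
    using P by (rule Least_le)
  ultimately show False using assms(2) by simp
qed


theorem proposition3:
  fixes f :: "real^'m \<Rightarrow> real^'n \<Rightarrow> real"
    and g1 :: "real^'m \<Rightarrow> real^'n \<Rightarrow> real^'m" and g2 :: "real^'m \<Rightarrow> real^'n \<Rightarrow> real^'n"
    and H11 :: "real^'m \<Rightarrow> real^'n \<Rightarrow> real^'m^'m" and H12 :: "real^'m \<Rightarrow> real^'n \<Rightarrow> real^'n^'m"
    and H21 :: "real^'m \<Rightarrow> real^'n \<Rightarrow> real^'m^'n" and H22 :: "real^'m \<Rightarrow> real^'n \<Rightarrow> real^'n^'n"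
    and L1 L2 \<mu> \<alpha> \<beta> \<epsilon>' \<eta>x \<eta>y :: real
    and x s :: "nat \<Rightarrow> real^'m" and y :: "nat \<Rightarrow> real^'n" and N :: "nat \<Rightarrow> nat"
  defines "\<kappa> \<equiv> L1 / \<mu>"
    and "LG \<equiv> L2 * (1 + L1 / \<mu>)\<^sup>2"
    and "LPhi \<equiv> L2 * (1 + L1 / \<mu>)^3"
  assumes SA: "standing_assumption f g1 g2 H11 H12 H21 H22 L1 L2 \<mu>"
    and \<alpha>: "0 < \<alpha>" and \<beta>: "0 < \<beta>"
    and \<epsilon>': "0 < \<epsilon>'" "\<epsilon>' * (\<beta> * LG) \<le> \<alpha> * L1"
    and \<eta>x: "0 < \<eta>x" "\<eta>x \<le> 1 / (9 * LPhi + 18 * \<alpha> + 28 * \<beta>)"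
    and \<eta>y: "\<eta>y = 2 / (L1 + \<mu>)"
    and s0: "norm (s 0) = \<epsilon>'"
    and ystep: "\<And>t. y (Suc t) = ((\<lambda>v. v + \<eta>y *\<^sub>R g2 (x t) v) ^^ N t) (y t)"
    and sstep: "\<And>t u. cubic_model (g1 (x t) (y (Suc t))) (Gmat H11 H12 H21 H22 (x t) (y (Suc t))) \<eta>x (s (Suc t))
                  \<le> cubic_model (g1 (x t) (y (Suc t))) (Gmat H11 H12 H21 H22 (x t) (y (Suc t))) \<eta>x u"
    and xstep: "\<And>t. x (Suc t) = x t + s (Suc t)"
    and N0: "L1 * norm (y 0 - ystar f (x 0)) / (2 * \<beta> * \<epsilon>'\<^sup>2) > 0 \<longrightarrow>
               \<kappa> * ln (L1 * norm (y 0 - ystar f (x 0)) / (2 * \<beta> * \<epsilon>'\<^sup>2)) \<le> real (N 0)"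
    and Nt: "\<And>t. t \<ge> 1 \<Longrightarrow>
               2 * L1 * \<alpha> * norm (s (t - 1)) + L1 * (\<alpha> + LG * \<kappa>) * norm (s t) > 0 \<longrightarrow>
               LG > 0 \<and>
               \<kappa> * ln ((2 * L1 * \<alpha> * norm (s (t - 1)) + L1 * (\<alpha> + LG * \<kappa>) * norm (s t))
                         / (LG * \<beta> * \<epsilon>'\<^sup>2)) \<le> real (N t)"
  shows "\<forall>t. enat t + 2 \<le> Tprime \<epsilon>' s \<longrightarrow>
           (Phi f (x (Suc t)) + (LPhi + 2 * \<alpha> + 3 * \<beta>) * norm (s (Suc t)) ^ 3)
         - (Phi f (x t) + (LPhi + 2 * \<alpha> + 3 * \<beta>) * norm (s t) ^ 3)
         \<le> - (LPhi + \<alpha> + \<beta>) * (norm (s (Suc t)) ^ 3 + norm (s t) ^ 3)"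
proof -
  interpret S: SAloc f g1 g2 H11 H12 H21 H22 L1 L2 \<mu> by (rule SAloc.intro) (rule SA)
  have mu: "0 < \<mu>" by (rule S.mu_pos)
  have muL: "\<mu> \<le> L1" by (rule S.mu_le_L1)
  have L1p: "0 < L1" using mu muL by simp
  have L2n: "0 \<le> L2" by (rule S.L2_nonneg)
  have kn: "0 \<le> \<kappa>" using mu L1p by (simp add: \<kappa>_def)
  have LGn: "0 \<le> LG" using L2n by (simp add: LG_def)
  have LPn: "0 \<le> LPhi" using L2n mu L1p by (simp add: LPhi_def)
  define \<rho> where "\<rho> = (L1 - \<mu>) / (L1 + \<mu>)"
  have rho0: "0 \<le> \<rho>" using mu muL by (simp add: \<rho>_def)
  define ys where "ys t = ystar f (x t)" for t
  define \<delta> where "\<delta> t = norm (y (Suc t) - ys t)" for t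
  have \<delta>n: "0 \<le> \<delta> t" for t by (simp add: \<delta>_def)
  have gda: "\<delta> t \<le> \<rho> ^ N t * norm (y t - ys t)" for t
    using S.gda_iter[where x = "x t" and k = "N t" and y = "y t"] unfolding \<delta>_def ys_def \<rho>_def ystep \<eta>y by simp
  have ylip: "norm (ys (Suc t) - ys t) \<le> \<kappa> * norm (s (Suc t))" for t
    using S.ystar_lip[of "x (Suc t)" "x t"] by (simp add: ys_def xstep \<kappa>_def)
  have reg: "\<epsilon>' < max (norm (s t)) (norm (s (Suc t)))" if "enat (Suc t) < Tprime \<epsilon>' s" for t
    using regime[of "Suc t" \<epsilon>' s] that by simp
  have Dc: "L1 * \<delta> t \<le> 2 * \<beta> * \<epsilon>' ^ 2" if "enat (Suc t) < Tprime \<epsilon>' s" for t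
    using that
  proof (induction t)
    case 0
    show ?case
    proof (cases "norm (y 0 - ys 0) = 0")
      case True
      then have "\<delta> 0 \<le> 0" using gda[of 0] by simp
      then have "L1 * \<delta> 0 \<le> 0" using L1p by (simp add: mult_le_0_iff)
      then show ?thesis using \<beta> by (smt (verit) zero_le_power2 mult_nonneg_nonneg)
    next
      case False
      define A where "A = L1 * norm (y 0 - ys 0) / (2 * \<beta> * \<epsilon>' ^ 2)"
      have Ap: "0 < A" using False L1p \<beta> \<epsilon>'(1) by (simp add: A_def)
      have "\<kappa> * ln A \<le> real (N 0)" using N0 Ap unfolding A_def ys_def by simp
      then have "\<rho> ^ N 0 * A \<le> 1" unfolding \<rho>_def using rate[OF mu muL Ap] by (simp add: \<kappa>_def)
      then have r: "\<rho> ^ N 0 * (L1 * norm (y 0 - ys 0)) \<le> 2 * \<beta> * \<epsilon>' ^ 2"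
        using \<beta> \<epsilon>'(1) by (simp add: A_def field_simps)
      have "L1 * \<delta> 0 \<le> L1 * (\<rho> ^ N 0 * norm (y 0 - ys 0))"
        using gda[of 0] L1p by (intro mult_left_mono) auto
      also have "\<dots> = \<rho> ^ N 0 * (L1 * norm (y 0 - ys 0))" by simp
      finally show ?thesis using r by linarith
    qed
  next
    case (Suc t)
    have lt: "enat (Suc t) < Tprime \<epsilon>' s"
      using Suc.prems by (metis enat_ord_simps(2) lessI order.strict_trans)
    have IH: "L1 * \<delta> t \<le> 2 * \<beta> * \<epsilon>' ^ 2" using Suc.IH[OF lt] .
    define \<sigma>0 where "\<sigma>0 = norm (s t)"
    define \<sigma>1 where "\<sigma>1 = norm (s (Suc t))"
    have s0n: "0 \<le> \<sigma>0" and s1n: "0 \<le> \<sigma>1" by (simp_all add: \<sigma>0_def \<sigma>1_def)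
    have rg: "\<epsilon>' < max \<sigma>0 \<sigma>1" using reg[OF lt] by (simp add: \<sigma>0_def \<sigma>1_def)
    define B where "B = 2 * L1 * \<alpha> * \<sigma>0 + L1 * (\<alpha> + LG * \<kappa>) * \<sigma>1"
    have t1: "0 \<le> 2 * L1 * \<alpha> * \<sigma>0" using L1p \<alpha> s0n by simp
    have t2: "L1 * \<alpha> * \<sigma>1 \<le> L1 * (\<alpha> + LG * \<kappa>) * \<sigma>1"
      using L1p s1n LGn kn by (intro mult_right_mono mult_left_mono) auto
    have key0: "2 * \<alpha> * L1 * \<epsilon>' \<le> 4 * L1 * \<alpha> * \<sigma>0 + 2 * L1 * \<alpha> * \<sigma>1"
    proof -
      have r1: "2 * \<alpha> * L1 * \<epsilon>' = 2 * (\<alpha> * L1 * \<epsilon>')"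
        and r2: "4 * L1 * \<alpha> * \<sigma>0 = 4 * (\<alpha> * L1 * \<sigma>0)"
        and r3: "2 * L1 * \<alpha> * \<sigma>1 = 2 * (\<alpha> * L1 * \<sigma>1)" by (simp_all add: ac_simps)
      have n0: "0 \<le> \<alpha> * L1 * \<sigma>0" and n1: "0 \<le> \<alpha> * L1 * \<sigma>1"
        using \<alpha> L1p s0n s1n by simp_all
      have aL: "0 \<le> \<alpha> * L1" using \<alpha> L1p by simp
      show ?thesis
      proof (cases "\<epsilon>' < \<sigma>0")
        case True
        then have "\<alpha> * L1 * \<epsilon>' \<le> \<alpha> * L1 * \<sigma>0" using aL by (intro mult_left_mono) auto
        then show ?thesis unfolding r1 r2 r3 using n0 n1 by linarith
      next
        case False
        then have "\<epsilon>' < \<sigma>1" using rg by (simp add: max_def split: if_splits)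
        then have "\<alpha> * L1 * \<epsilon>' \<le> \<alpha> * L1 * \<sigma>1" using aL by (intro mult_left_mono) auto
        then show ?thesis unfolding r1 r2 r3 using n0 n1 by linarith
      qed
    qed
    have Bp: "0 < B"
    proof -
      have "0 < 2 * \<alpha> * L1 * \<epsilon>'" using \<alpha> L1p \<epsilon>'(1) by simp
      then have "0 < 4 * L1 * \<alpha> * \<sigma>0 + 2 * L1 * \<alpha> * \<sigma>1" using key0 by linarith
      then show ?thesis unfolding B_def using t2 t1 by simp
    qed
    have Nt': "LG > 0 \<and> \<kappa> * ln (B / (LG * \<beta> * \<epsilon>' ^ 2)) \<le> real (N (Suc t))"
      using Nt[of "Suc t"] Bp by (simp add: B_def \<sigma>0_def \<sigma>1_def)
    then have LGp: "0 < LG" by simp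
    define A where "A = B / (LG * \<beta> * \<epsilon>' ^ 2)"
    have Ap: "0 < A" using Bp LGp \<beta> \<epsilon>'(1) by (simp add: A_def)
    have "\<rho> ^ N (Suc t) * A \<le> 1" unfolding \<rho>_def
      using rate[OF mu muL Ap] Nt' by (simp add: \<kappa>_def A_def)
    then have rB: "\<rho> ^ N (Suc t) * B \<le> LG * \<beta> * \<epsilon>' ^ 2"
      using LGp \<beta> \<epsilon>'(1) by (simp add: A_def field_simps)
    have dd: "\<delta> (Suc t) \<le> \<rho> ^ N (Suc t) * (\<delta> t + \<kappa> * \<sigma>1)"
    proof -
      have "norm (y (Suc t) - ys (Suc t)) \<le> norm (y (Suc t) - ys t) + norm (ys t - ys (Suc t))"
        by (rule norm_diff_triangle_le[of _ "ys t"]) simp_all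
      also have "\<dots> \<le> \<delta> t + \<kappa> * \<sigma>1"
        using ylip[of t] by (simp add: \<delta>_def \<sigma>1_def norm_minus_commute)
      finally have "norm (y (Suc t) - ys (Suc t)) \<le> \<delta> t + \<kappa> * \<sigma>1" .
      then have "\<rho> ^ N (Suc t) * norm (y (Suc t) - ys (Suc t)) \<le> \<rho> ^ N (Suc t) * (\<delta> t + \<kappa> * \<sigma>1)"
        using rho0 by (intro mult_left_mono) auto
      then show ?thesis using gda[of "Suc t"] by linarith
    qed
    have key: "LG * (L1 * (\<delta> t + \<kappa> * \<sigma>1)) \<le> 2 * B"
    proof -
      have a: "LG * (L1 * \<delta> t) \<le> LG * (2 * \<beta> * \<epsilon>' ^ 2)" using IH LGn by (rule mult_left_mono)
      have b: "LG * (2 * \<beta> * \<epsilon>' ^ 2) = 2 * \<epsilon>' * (\<epsilon>' * (\<beta> * LG))" by (simp add: power2_eq_square algebra_simps)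
      have c: "2 * \<epsilon>' * (\<epsilon>' * (\<beta> * LG)) \<le> 2 * \<epsilon>' * (\<alpha> * L1)" using \<epsilon>' by (intro mult_left_mono) auto
      have d: "LG * (L1 * (\<kappa> * \<sigma>1)) \<le> 2 * (L1 * (LG * \<kappa>) * \<sigma>1)"
        using LGn L1p kn s1n by (simp add: algebra_simps mult_nonneg_nonneg)
      have e: "2 * B = 4 * L1 * \<alpha> * \<sigma>0 + 2 * L1 * \<alpha> * \<sigma>1 + 2 * (L1 * (LG * \<kappa>) * \<sigma>1)"
        by (simp add: B_def algebra_simps)
      have f: "LG * (L1 * (\<delta> t + \<kappa> * \<sigma>1)) = LG * (L1 * \<delta> t) + LG * (L1 * (\<kappa> * \<sigma>1))"
        by (simp add: algebra_simps)
      have g: "2 * \<epsilon>' * (\<alpha> * L1) = 2 * \<alpha> * L1 * \<epsilon>'" by simp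
      show ?thesis unfolding f e using a b c d key0 g by linarith
    qed
    have "LG * (L1 * \<delta> (Suc t)) \<le> LG * (L1 * (\<rho> ^ N (Suc t) * (\<delta> t + \<kappa> * \<sigma>1)))"
      using dd LGn L1p by (intro mult_left_mono) auto
    also have "\<dots> = \<rho> ^ N (Suc t) * (LG * (L1 * (\<delta> t + \<kappa> * \<sigma>1)))" by (simp add: algebra_simps)
    also have "\<dots> \<le> \<rho> ^ N (Suc t) * (2 * B)" using key rho0 by (intro mult_left_mono) auto
    also have "\<dots> = 2 * (\<rho> ^ N (Suc t) * B)" by simp
    also have "\<dots> \<le> 2 * (LG * \<beta> * \<epsilon>' ^ 2)" using rB by simp
    also have "\<dots> = LG * (2 * \<beta> * \<epsilon>' ^ 2)" by simp
    finally show ?case using LGp by (simp add: mult_le_cancel_left_pos)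
  qed
  show ?thesis
  proof (intro allI impI)
    fix t assume tT: "enat t + 2 \<le> Tprime \<epsilon>' s"
    have lt: "enat (Suc t) < Tprime \<epsilon>' s"
    proof -
      have "enat t + 2 = enat (Suc (Suc t))" by (simp add: numeral_eq_enat)
      then have "enat (Suc t) < enat t + 2" by simp
      then show ?thesis using tT by (rule less_le_trans)
    qed
    define xt where "xt = x t"
    define s1 where "s1 = s (Suc t)"
    define \<sigma> where "\<sigma> = norm s1"
    define \<sigma>0 where "\<sigma>0 = norm (s t)"
    define yp where "yp = y (Suc t)"
    define GG where "GG = Gmat H11 H12 H21 H22"
    have sn: "0 \<le> \<sigma>" and s0n: "0 \<le> \<sigma>0" by (simp_all add: \<sigma>_def \<sigma>0_def)
    have P1: "Phi f (x (Suc t)) \<le> Phi f xt + g1 xt (ys t) \<bullet> s1 + 1 / 2 * (s1 \<bullet> (GG xt (ys t) *v s1)) + LPhi * \<sigma> ^ 3 / 6"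
      using S.Phi_taylor[of xt s1] unfolding xstep xt_def s1_def ys_def GG_def \<sigma>_def LPhi_def by simp
    have P2: "g1 xt (ys t) \<bullet> s1 \<le> g1 xt yp \<bullet> s1 + L1 * \<delta> t * \<sigma>"
      using S.g1_err[where x = xt and y = "ys t" and y' = yp and s = s1] unfolding \<delta>_def yp_def \<sigma>_def xt_def by (simp add: norm_minus_commute)
    have P3: "s1 \<bullet> (GG xt (ys t) *v s1) \<le> s1 \<bullet> (GG xt yp *v s1) + LG * \<delta> t * \<sigma> ^ 2"
      using S.G_lip[of s1 xt "ys t" yp] unfolding \<delta>_def yp_def \<sigma>_def xt_def GG_def LG_def
      by (simp add: norm_minus_commute)
    have P4: "g1 xt yp \<bullet> s1 + 1 / 2 * (s1 \<bullet> (GG xt yp *v s1)) \<le> - 1 / (4 * \<eta>x) * \<sigma> ^ 3"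
      using cubic_opt[OF \<eta>x(1) sstep[of t]] unfolding xt_def yp_def s1_def GG_def \<sigma>_def by blast
    have P3': "1 / 2 * (s1 \<bullet> (GG xt (ys t) *v s1)) \<le> 1 / 2 * (s1 \<bullet> (GG xt yp *v s1)) + LG * \<delta> t * \<sigma> ^ 2 / 2"
      using P3 by simp
    have xe: "x t = xt" by (simp add: xt_def)
    define P where "P = \<sigma> ^ 3"
    define Q where "Q = \<sigma>0 ^ 3"
    have Pn: "0 \<le> P" using sn by (simp add: P_def)
    have Qn: "0 \<le> Q" using s0n by (simp add: Q_def)
    define E where "E = L1 * \<delta> t * \<sigma> + LG * \<delta> t * \<sigma> ^ 2 / 2"
    have F1: "Phi f (x (Suc t)) - Phi f (x t) \<le> - (1 / (4 * \<eta>x) * P) + LPhi * P / 6 + E"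
      using P1 P2 P3' P4 unfolding xe E_def P_def by simp
    define Dn where "Dn = 9 * LPhi + 18 * \<alpha> + 28 * \<beta>"
    have Dp: "0 < Dn" using LPn \<alpha> \<beta> by (simp add: Dn_def)
    have "\<eta>x * Dn \<le> 1" using \<eta>x Dp by (simp add: Dn_def field_simps)
    then have "Dn \<le> 1 / \<eta>x" using \<eta>x(1) by (simp add: field_simps)
    then have "Dn / 4 * P \<le> 1 / (4 * \<eta>x) * P" using Pn by (intro mult_right_mono) auto
    then have F2: "9 / 4 * (LPhi * P) + 9 / 2 * (\<alpha> * P) + 7 * (\<beta> * P) \<le> 1 / (4 * \<eta>x) * P"
      by (simp add: Dn_def algebra_simps)
    have Dt: "L1 * \<delta> t \<le> 2 * \<beta> * \<epsilon>' ^ 2" by (rule Dc[OF lt])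
    have LGd: "LG * \<delta> t \<le> 2 * \<alpha> * \<epsilon>'"
    proof -
      have "L1 * (LG * \<delta> t) = LG * (L1 * \<delta> t)" by simp
      also have "\<dots> \<le> LG * (2 * \<beta> * \<epsilon>' ^ 2)" using Dt LGn by (rule mult_left_mono)
      also have "\<dots> = 2 * \<epsilon>' * (\<epsilon>' * (\<beta> * LG))" by (simp add: power2_eq_square algebra_simps)
      also have "\<dots> \<le> 2 * \<epsilon>' * (\<alpha> * L1)" using \<epsilon>' by (intro mult_left_mono) auto
      also have "\<dots> = L1 * (2 * \<alpha> * \<epsilon>')" by simp
      finally show ?thesis using L1p by (simp add: mult_le_cancel_left_pos)
    qed
    have e1: "L1 * \<delta> t * \<sigma> \<le> 2 * \<beta> * (\<epsilon>' ^ 2 * \<sigma>)"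
      using Dt sn by (simp add: mult_right_mono mult.assoc[symmetric])
    have e2: "LG * \<delta> t * \<sigma> ^ 2 / 2 \<le> \<alpha> * (\<epsilon>' * \<sigma> ^ 2)"
    proof -
      have "LG * \<delta> t * \<sigma> ^ 2 \<le> 2 * \<alpha> * \<epsilon>' * \<sigma> ^ 2" using LGd by (simp add: mult_right_mono)
      then show ?thesis by simp
    qed
    have F3: "E \<le> 2 * (\<beta> * P) + \<alpha> * P + 2 * (\<beta> * Q) + \<alpha> * Q"
    proof (cases "\<epsilon>' \<le> \<sigma>")
      case True
      have a: "\<epsilon>' ^ 2 * \<sigma> \<le> P"
      proof -
        have "\<epsilon>' ^ 2 \<le> \<sigma> ^ 2" using True \<epsilon>'(1) by (intro power_mono) auto
        then have "\<epsilon>' ^ 2 * \<sigma> \<le> \<sigma> ^ 2 * \<sigma>" using sn by (rule mult_right_mono)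
        then show ?thesis by (simp add: P_def power2_eq_square power3_eq_cube)
      qed
      have b: "\<epsilon>' * \<sigma> ^ 2 \<le> P"
      proof -
        have "\<epsilon>' * \<sigma> ^ 2 \<le> \<sigma> * \<sigma> ^ 2" using True by (intro mult_right_mono) auto
        then show ?thesis by (simp add: P_def power2_eq_square power3_eq_cube)
      qed
      have "2 * \<beta> * (\<epsilon>' ^ 2 * \<sigma>) \<le> 2 * \<beta> * P" using a \<beta> by simp
      moreover have "\<alpha> * (\<epsilon>' * \<sigma> ^ 2) \<le> \<alpha> * P" using b \<alpha> by simp
      moreover have "0 \<le> \<beta> * Q" "0 \<le> \<alpha> * Q" using \<alpha> \<beta> Qn by simp_all
      ultimately show ?thesis using e1 e2 unfolding E_def by linarith
    next
      case False
      then have sl: "\<sigma> < \<epsilon>'" by simp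
      then have s0: "\<epsilon>' < \<sigma>0" using reg[OF lt] by (simp add: \<sigma>_def \<sigma>0_def s1_def max_def split: if_splits)
      have e3: "\<epsilon>' ^ 3 \<le> Q" unfolding Q_def using s0 \<epsilon>'(1) by (intro power_mono) auto
      have a: "\<epsilon>' ^ 2 * \<sigma> \<le> Q"
      proof -
        have "\<epsilon>' ^ 2 * \<sigma> \<le> \<epsilon>' ^ 2 * \<epsilon>'" using sl by (intro mult_left_mono) auto
        then show ?thesis using e3 by (simp add: power2_eq_square power3_eq_cube)
      qed
      have b: "\<epsilon>' * \<sigma> ^ 2 \<le> Q"
      proof -
        have "\<sigma> ^ 2 \<le> \<epsilon>' ^ 2" using sl sn by (intro power_mono) auto
        then have "\<epsilon>' * \<sigma> ^ 2 \<le> \<epsilon>' * \<epsilon>' ^ 2" using \<epsilon>'(1) by (intro mult_left_mono) auto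
        then show ?thesis using e3 by (simp add: power2_eq_square power3_eq_cube)
      qed
      have "2 * \<beta> * (\<epsilon>' ^ 2 * \<sigma>) \<le> 2 * \<beta> * Q" using a \<beta> by simp
      moreover have "\<alpha> * (\<epsilon>' * \<sigma> ^ 2) \<le> \<alpha> * Q" using b \<alpha> by simp
      moreover have "0 \<le> \<beta> * P" "0 \<le> \<alpha> * P" using \<alpha> \<beta> Pn by simp_all
      ultimately show ?thesis using e1 e2 unfolding E_def by linarith
    qed
    have F4: "0 \<le> LPhi * P" "0 \<le> \<alpha> * P" "0 \<le> \<beta> * P" using LPn \<alpha> \<beta> Pn by simp_all
    have goal_eq: "(Phi f (x (Suc t)) + (LPhi + 2 * \<alpha> + 3 * \<beta>) * norm (s (Suc t)) ^ 3)
         - (Phi f (x t) + (LPhi + 2 * \<alpha> + 3 * \<beta>) * norm (s t) ^ 3)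
         - (- (LPhi + \<alpha> + \<beta>) * (norm (s (Suc t)) ^ 3 + norm (s t) ^ 3))
       = (Phi f (x (Suc t)) - Phi f (x t)) + 2 * (LPhi * P) + 3 * (\<alpha> * P) + 4 * (\<beta> * P) - \<alpha> * Q - 2 * (\<beta> * Q)"
      unfolding P_def Q_def \<sigma>_def \<sigma>0_def s1_def by (simp add: algebra_simps)
    have "(Phi f (x (Suc t)) - Phi f (x t)) + 2 * (LPhi * P) + 3 * (\<alpha> * P) + 4 * (\<beta> * P) - \<alpha> * Q - 2 * (\<beta> * Q) \<le> 0"
      using F1 F2 F3 F4 by linarith
    then show "(Phi f (x (Suc t)) + (LPhi + 2 * \<alpha> + 3 * \<beta>) * norm (s (Suc t)) ^ 3)
         - (Phi f (x t) + (LPhi + 2 * \<alpha> + 3 * \<beta>) * norm (s t) ^ 3)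
         \<le> - (LPhi + \<alpha> + \<beta>) * (norm (s (Suc t)) ^ 3 + norm (s t) ^ 3)"
      using goal_eq by linarith
  qed
qed


end
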